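(* Let $\zeta\in(0,\infty)$ and $(h,w)\in\boldsymbol\Sigma([0,\zeta])$. Let $$U_{h,w}=\Big\{s\in[0,\zeta]:\ h(s)>0\ \text{and}\ \forall\varepsilon\in(0,h(s)),\ \inf_{r\in[h(s)-\varepsilon,h(s)]}w_s(r)<\widehat w_s\Big\}.$$ Assume that $[0,\zeta]\setminus U_{h,w}$ is Lebesgue-negligible and that the tree $(T_h,d_h,r_h,\mu_h)$ coded by $h$ is a continuum real tree. Then the snake tree $(T_{h,w},d_{h,w},r_{h,w},\mu_{h,w})$ is a continuum real tree.
   Context: Snakes: $(h,w)\in\boldsymbol\Sigma([0,\zeta])$ means $h:[0,\zeta]\to[0,\infty)$ continuous with $h(0)=h(\zeta)=0$, $s\mapsto w_s$ continuous into continuous functions $[0,\infty)\to\mathbb R$ (local uniform topology), $w_s(r)=w_s(h(s))=:\widehat w_s$ for $r\ge h(s)$, and $w_{s_1}(r)=w_{s_2}(r)$ for $r\le m_h(s_1,s_2):=\min_{[s_1\wedge s_2,s_1\vee s_2]}h$. Tree coded by $h$: $d_h(s_1,s_2)=h(s_1)+h(s_2)-2m_h(s_1,s_2)$, $T_h=[0,\zeta]/\{d_h=0\}$, root the class of $0$, $\mu_h$ image of Lebesgue measure. Snake metric: $d_{h,w}(s_1,s_2)=\widehat w_{s_1}+\widehat w_{s_2}-2\min\big(\min_{[m_h(s_1,s_2),h(s_1)]}w_{s_1},\min_{[m_h(s_1,s_2),h(s_2)]}w_{s_2}\big)$; it is a continuous pseudo-metric, and $(T_{h,w},d_{h,w},r_{h,w},\mu_{h,w})$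 is the quotient $[0,\zeta]/\{d_{h,w}=0\}$ with induced metric, root the class of $0$ and image of Lebesgue measure. A continuum real tree is a compact real tree $(T,d,r,\nu)$ with $\nu$ a finite diffuse Borel measure of topological support $T$ such that $\nu$-almost every point is a leaf, i.e. a point $\sigma\neq r$ with $T\setminus\{\sigma\}$ connected. *)

theory Defs
  imports "HOL-Analysis.Analysis" "HOL-Probability.Probability"
begin

definition borel_of :: "'a topology \<Rightarrow> 'a measure" where
  "borel_of T = sigma (topspace T) {U. openin T U}"

definition geodesic :: "'a set \<Rightarrow> ('a \<Rightarrow> 'a \<Rightarrow> real) \<Rightarrow> 'a \<Rightarrow> 'a \<Rightarrow> (real \<Rightarrow> 'a) \<Rightarrow> bool" where
  "geodesic M d a b f \<longleftrightarrow> f ` {0..d a b} \<subseteq> M \<and> f 0 = a \<and> f (d a b) = b \<and>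
     (\<forall>s\<in>{0..d a b}. \<forall>t\<in>{0..d a b}. d (f s) (f t) = \<bar>s - t\<bar>)"

definition real_tree :: "'a set \<Rightarrow> ('a \<Rightarrow> 'a \<Rightarrow> real) \<Rightarrow> bool" where
  "real_tree M d \<longleftrightarrow> Metric_space M d \<and>
     (\<forall>a\<in>M. \<forall>b\<in>M.
        (\<exists>f. geodesic M d a b f) \<and>
        (\<forall>f g. geodesic M d a b f \<and> geodesic M d a b g \<longrightarrow> (\<forall>s\<in>{0..d a b}. f s = g s)) \<and>
        (\<forall>q f. continuous_map (top_of_set {0..1::real}) (Metric_space.mtopology M d) q \<and>
               inj_on q {0..1} \<and> q 0 = a \<and> q 1 = b \<and> geodesic M d a b f
               \<longrightarrow> q ` {0..1} = f ` {0..d a b}))"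

definition is_leaf :: "'a set \<Rightarrow> ('a \<Rightarrow> 'a \<Rightarrow> real) \<Rightarrow> 'a \<Rightarrow> 'a \<Rightarrow> bool" where
  "is_leaf M d r x \<longleftrightarrow> x \<in> M \<and> x \<noteq> r \<and> connectedin (Metric_space.mtopology M d) (M - {x})"

definition msupport :: "'a set \<Rightarrow> ('a \<Rightarrow> 'a \<Rightarrow> real) \<Rightarrow> 'a measure \<Rightarrow> 'a set" where
  "msupport M d \<nu> = {x\<in>M. \<forall>U. openin (Metric_space.mtopology M d) U \<and> x \<in> U \<longrightarrow> emeasure \<nu> U > 0}"

definition continuum_real_tree :: "'a set \<Rightarrow> ('a \<Rightarrow> 'a \<Rightarrow> real) \<Rightarrow> 'a \<Rightarrow> 'a measure \<Rightarrow> bool" where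
  "continuum_real_tree M d r \<nu> \<longleftrightarrow>
     real_tree M d \<and> compact_space (Metric_space.mtopology M d) \<and> r \<in> M \<and>
     space \<nu> = M \<and> sets \<nu> = sets (borel_of (Metric_space.mtopology M d)) \<and>
     finite_measure \<nu> \<and>
     (\<forall>x\<in>M. emeasure \<nu> {x} = 0) \<and>
     msupport M d \<nu> = M \<and>
     (AE x in \<nu>. is_leaf M d r x)"

definition qclass :: "real \<Rightarrow> (real \<Rightarrow> real \<Rightarrow> real) \<Rightarrow> real \<Rightarrow> real set" where
  "qclass \<zeta> dd s = {t\<in>{0..\<zeta>}. dd s t = 0}"

definition qspace :: "real \<Rightarrow> (real \<Rightarrow> real \<Rightarrow> real) \<Rightarrow> real set set" where
  "qspace \<zeta> dd = qclass \<zeta> dd ` {0..\<zeta>}"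

definition qdist :: "real \<Rightarrow> (real \<Rightarrow> real \<Rightarrow> real) \<Rightarrow> real set \<Rightarrow> real set \<Rightarrow> real" where
  "qdist \<zeta> dd A B = (if A \<in> qspace \<zeta> dd \<and> B \<in> qspace \<zeta> dd
      then dd (SOME s. s \<in> A) (SOME t. t \<in> B) else 0)"

definition qroot :: "real \<Rightarrow> (real \<Rightarrow> real \<Rightarrow> real) \<Rightarrow> real set" where
  "qroot \<zeta> dd = qclass \<zeta> dd 0"

definition qmeasure :: "real \<Rightarrow> (real \<Rightarrow> real \<Rightarrow> real) \<Rightarrow> real set measure" where
  "qmeasure \<zeta> dd = distr (restrict_space lebesgue {0..\<zeta>})
      (borel_of (Metric_space.mtopology (qspace \<zeta> dd) (qdist \<zeta> dd))) (qclass \<zeta> dd)"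

definition mh :: "(real \<Rightarrow> real) \<Rightarrow> real \<Rightarrow> real \<Rightarrow> real" where
  "mh h s1 s2 = Inf (h ` {min s1 s2..max s1 s2})"

definition dh :: "(real \<Rightarrow> real) \<Rightarrow> real \<Rightarrow> real \<Rightarrow> real" where
  "dh h s1 s2 = h s1 + h s2 - 2 * mh h s1 s2"

definition dhw :: "(real \<Rightarrow> real) \<Rightarrow> (real \<Rightarrow> real \<Rightarrow> real) \<Rightarrow> real \<Rightarrow> real \<Rightarrow> real" where
  "dhw h w s1 s2 = w s1 (h s1) + w s2 (h s2)
     - 2 * min (Inf (w s1 ` {mh h s1 s2..h s1})) (Inf (w s2 ` {mh h s1 s2..h s2}))"

text \<open>Snake condition: (h,w) in Sigma([0,zeta]). Here w s is the path w_s,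
  considered on [0,\<infinity>) (its values at negative arguments are irrelevant).\<close>
definition is_snake :: "real \<Rightarrow> (real \<Rightarrow> real) \<Rightarrow> (real \<Rightarrow> real \<Rightarrow> real) \<Rightarrow> bool" where
  "is_snake \<zeta> h w \<longleftrightarrow>
     continuous_on {0..\<zeta>} h \<and> (\<forall>s\<in>{0..\<zeta>}. h s \<ge> 0) \<and> h 0 = 0 \<and> h \<zeta> = 0 \<and>
     (\<forall>s\<in>{0..\<zeta>}. continuous_on {0..} (w s)) \<and>
     (\<forall>s0\<in>{0..\<zeta>}. \<forall>R>0. \<forall>e>0. \<exists>\<delta>>0. \<forall>s\<in>{0..\<zeta>}. \<bar>s - s0\<bar> < \<delta> \<longrightarrow>
         (\<forall>r\<in>{0..R}. \<bar>w s r - w s0 r\<bar> < e)) \<and>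
     (\<forall>s\<in>{0..\<zeta>}. \<forall>r\<ge>h s. w s r = w s (h s)) \<and>
     (\<forall>s1\<in>{0..\<zeta>}. \<forall>s2\<in>{0..\<zeta>}. \<forall>r\<in>{0..mh h s1 s2}. w s1 r = w s2 r)"

definition Uhw :: "real \<Rightarrow> (real \<Rightarrow> real) \<Rightarrow> (real \<Rightarrow> real \<Rightarrow> real) \<Rightarrow> real set" where
  "Uhw \<zeta> h w = {s\<in>{0..\<zeta>}. h s > 0 \<and>
      (\<forall>e\<in>{0<..<h s}. Inf (w s ` {h s - e..h s}) < w s (h s))}"

end

theory Submission
  imports Defs
begin

definition fourpt :: "'a set \<Rightarrow> ('a \<Rightarrow> 'a \<Rightarrow> real) \<Rightarrow> bool" where
  "fourpt M d \<longleftrightarrow> (\<forall>x\<in>M. \<forall>y\<in>M. \<forall>z\<in>M. \<forall>t\<in>M.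
      d x y + d z t \<le> max (d x z + d y t) (d x t + d y z))"

lemma fourptD:
  assumes "fourpt M d" "x\<in>M" "y\<in>M" "z\<in>M" "t\<in>M"
  shows "d x y + d z t \<le> max (d x z + d y t) (d x t + d y z)"
  using assms unfolding fourpt_def by blast

lemma between_dist:
  assumes ms: "Metric_space M d" and fp: "fourpt M d"
    and "a\<in>M" "b\<in>M" "x\<in>M" "y\<in>M"
    and "d a x = p" "d x b = d a b - p" "d a y = q" "d y b = d a b - q"
  shows "d x y = \<bar>p - q\<bar>"
proof -
  interpret Metric_space M d by (rule ms)
  have 1: "d x y + d a b \<le> max (d x a + d y b) (d x b + d y a)"
    using fourptD[OF fp, of x y a b] assms by blast
  have "d x a = p" "d y a = q" using assms commute by auto
  with 1 assms have le: "d x y \<le> \<bar>p - q\<bar>" by (auto simp: max_def split: if_splits)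
  have "d a y \<le> d a x + d x y" "d a x \<le> d a y + d y x" using triangle assms by auto
  then have "\<bar>p - q\<bar> \<le> d x y" using assms commute by auto
  with le show ?thesis by simp
qed

lemma separation:
  assumes ms: "Metric_space M d" and fp: "fourpt M d"
    and xM: "x\<in>M" and aM: "a\<in>M" and bM: "b\<in>M" and "x \<noteq> a" "x \<noteq> b"
    and btw: "d a x + d x b = d a b"
    and C: "connectedin (Metric_space.mtopology M d) C" "a \<in> C" "b \<in> C"
  shows "x \<in> C"
proof (rule ccontr)
  assume xC: "x \<notin> C"
  interpret Metric_space M d by (rule ms)
  define g where "g y = d x y + d x a - d y a" for y
  define S where "S = {y\<in>M. g y > 0}"
  define V where "V = {y\<in>M. y \<noteq> x \<and> g y = 0}"
  have gnn: "g y \<ge> 0" if "y \<in> M" for y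
    using triangle[OF that xM aM] commute[of x y] unfolding g_def by linarith
  have oS: "openin mtopology S"
    unfolding openin_mtopology
  proof (intro conjI allI impI)
    show "S \<subseteq> M" unfolding S_def by auto
    fix y assume yS: "y \<in> S"
    show "\<exists>r>0. mball y r \<subseteq> S"
    proof (intro exI conjI)
      show "g y / 2 > 0" using yS unfolding S_def by auto
      show "mball y (g y / 2) \<subseteq> S"
      proof
        fix y' assume "y' \<in> mball y (g y / 2)"
        then have y'M: "y' \<in> M" and yM: "y \<in> M" and dl: "d y y' < g y / 2" by auto
        have "d x y \<le> d x y' + d y' y" using triangle[OF xM y'M yM] .
        moreover have "d y' a \<le> d y' y + d y a" using triangle[OF y'M yM aM] .
        ultimately have "g y' \<ge> g y - 2 * d y y'" unfolding g_def using commute[of y y'] by linarith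
        with dl show "y' \<in> S" unfolding S_def using y'M by auto
      qed
    qed
  qed
  have oV: "openin mtopology V"
    unfolding openin_mtopology
  proof (intro conjI allI impI)
    show "V \<subseteq> M" unfolding V_def by auto
    fix y assume yV: "y \<in> V"
    then have yM: "y \<in> M" and yx: "y \<noteq> x" and gy: "g y = 0" unfolding V_def by auto
    have pos: "d x y > 0" using yx yM xM by (metis nonneg zero order_le_less)
    show "\<exists>r>0. mball y r \<subseteq> V"
    proof (intro exI conjI)
      show "d x y / 2 > 0" using pos by auto
      show "mball y (d x y / 2) \<subseteq> V"
      proof
        fix y' assume "y' \<in> mball y (d x y / 2)"
        then have y'M: "y' \<in> M" and dl: "d y y' < d x y / 2" by auto
        have "d x y \<le> d x y' + d y' y" using triangle[OF xM y'M yM] .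
        then have gp: "d x y + d x y' - d y y' > 0" using dl pos commute[of y y'] by linarith
        have y'x: "y' \<noteq> x"
        proof
          assume "y' = x"
          with dl have "d y x < d x y / 2" by simp
          with commute[of x y] nonneg[of y x] show False by linarith
        qed
        have f: "d y a + d x y' \<le> max (d y x + d a y') (d y y' + d a x)"
          using fourptD[OF fp yM aM xM y'M] .
        have "d y a + d x y' \<le> d y x + d a y' \<or> d y a + d x y' \<le> d y y' + d a x"
          using f by (simp only: le_max_iff_disj)
        then have "g y' \<le> 0"
          using gy gp commute[of y x] commute[of a y'] commute[of a x] unfolding g_def
          by linarith
        with gnn[OF y'M] have "g y' = 0" by auto
        then show "y' \<in> V" unfolding V_def using y'M y'x by auto
      qed
    qed
  qed
  have CM: "C \<subseteq> M" using C(1) unfolding connectedin_def by auto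
  have "C \<subseteq> S \<union> V" using CM xC gnn unfolding S_def V_def by force
  moreover have "S \<inter> V \<inter> C = {}" unfolding S_def V_def by auto
  moreover have "a \<in> S"
  proof -
    have "d x a \<noteq> 0" using aM xM \<open>x\<noteq>a\<close> by simp
    then have "d x a > 0" using nonneg[of x a] by linarith
    moreover have "d a a = 0" using aM by simp
    ultimately show ?thesis unfolding S_def g_def using aM by simp
  qed
  moreover have "b \<in> V" unfolding V_def g_def using bM \<open>x\<noteq>b\<close> btw commute[of a x] commute[of b a] by auto
  ultimately show False using C oS oV unfolding connectedin by blast
qed

lemma path_piece_connected:
  assumes "continuous_map (top_of_set {0..1::real}) X q" "0 \<le> u" "v \<le> 1"
  shows "connectedin X (q ` {u..v})"
proof -
  have "connectedin (top_of_set {0..1::real}) {u..v}"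
    using assms by (auto simp: connectedin_subtopology)
  then show ?thesis using connectedin_continuous_map_image[OF assms(1)] by blast
qed

lemma geodesic_dists:
  assumes ms: "Metric_space M d" and f: "geodesic M d a b f" and s: "s \<in> {0..d a b}"
  shows "f s \<in> M" "d a (f s) = s" "d (f s) b = d a b - s"
proof -
  have 0: "0 \<in> {0..d a b}" "d a b \<in> {0..d a b}" using s by auto
  have iso: "\<And>u v. u \<in> {0..d a b} \<Longrightarrow> v \<in> {0..d a b} \<Longrightarrow> d (f u) (f v) = \<bar>u - v\<bar>"
    and fa: "f 0 = a" and fb: "f (d a b) = b" and fM: "f ` {0..d a b} \<subseteq> M"
    using f unfolding geodesic_def by auto
  show "f s \<in> M" using fM s by auto
  have "d a (f s) = \<bar>0 - s\<bar>" using iso[OF 0(1) s] fa by simp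
  then show "d a (f s) = s" using s by simp
  have "d (f s) b = \<bar>s - d a b\<bar>" using iso[OF s 0(2)] fb by simp
  then show "d (f s) b = d a b - s" using s by simp
qed

lemma geodesic_unique:
  assumes ms: "Metric_space M d" and fp: "fourpt M d"
    and f: "geodesic M d a b f" and g: "geodesic M d a b g" and s: "s \<in> {0..d a b}"
  shows "f s = g s"
proof -
  interpret Metric_space M d by (rule ms)
  let ?D = "d a b"
  have 0: "0 \<in> {0..?D}" "?D \<in> {0..?D}" using s by auto
  note F = geodesic_dists[OF ms f s] and G = geodesic_dists[OF ms g s]
  have aM: "a \<in> M" "b \<in> M" using geodesic_dists[OF ms f 0(1)] geodesic_dists[OF ms f 0(2)] f
    unfolding geodesic_def by auto
  have "d (f s) (g s) + ?D \<le> max (d (f s) a + d (g s) b) (d (f s) b + d (g s) a)"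
    using fourptD[OF fp F(1) G(1) aM] .
  moreover have "d (f s) a = s" "d (g s) a = s" using F G commute by auto
  ultimately have "d (f s) (g s) + ?D \<le> ?D" using F G by simp
  then have "d (f s) (g s) = 0" using nonneg[of "f s" "g s"] by linarith
  then show ?thesis using F G by simp
qed

lemma arc_image:
  assumes ms: "Metric_space M d" and fp: "fourpt M d"
    and q: "continuous_map (top_of_set {0..1::real}) (Metric_space.mtopology M d) q"
    and inj: "inj_on q {0..1}" and q0: "q 0 = a" and q1: "q 1 = b"
    and f: "geodesic M d a b f"
  shows "q ` {0..1} = f ` {0..d a b}"
proof -
  interpret Metric_space M d by (rule ms)
  let ?D = "d a b"
  have qM: "q t \<in> M" if "t \<in> {0..1}" for t
    using q that unfolding continuous_map by auto
  have aM: "a \<in> M" and bM: "b \<in> M" using qM q0 q1 by auto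
  have ab: "a \<noteq> b" using inj q0 q1 unfolding inj_on_def by force
  have fa: "f 0 = a" and fb: "f ?D = b" using f unfolding geodesic_def by auto
  show ?thesis
  proof
    show "f ` {0..?D} \<subseteq> q ` {0..1}"
    proof
      fix z assume "z \<in> f ` {0..?D}"
      then obtain \<delta> where \<delta>: "\<delta> \<in> {0..?D}" "z = f \<delta>" by auto
      note gd = geodesic_dists[OF ms f \<delta>(1)]
      show "z \<in> q ` {0..1}"
      proof (cases "z = a \<or> z = b")
        case True then show ?thesis using q0 q1 by force
      next
        case False
        show ?thesis
        proof (rule separation[OF ms fp _ aM bM])
          show "z \<in> M" "z \<noteq> a" "z \<noteq> b" using gd False \<delta> by auto
          show "d a z + d z b = ?D" using gd \<delta> by simp
          show "connectedin mtopology (q ` {0..1})" using path_piece_connected[OF q] by simp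
          show "a \<in> q ` {0..1}" "b \<in> q ` {0..1}" using q0 q1 by force+
        qed
      qed
    qed
  next
    show "q ` {0..1} \<subseteq> f ` {0..?D}"
    proof (rule ccontr)
      assume "\<not> q ` {0..1} \<subseteq> f ` {0..?D}"
      then obtain t where t: "t \<in> {0..1}" and ynot: "q t \<notin> f ` {0..?D}" by blast
      define y where "y = q t"
      have yM: "y \<in> M" using qM t y_def by auto
      have ya: "y \<noteq> a" using ynot fa y_def \<open>a\<in>M\<close> by (metis atLeastAtMost_iff image_eqI nonneg order_refl)
      have yb: "y \<noteq> b" using ynot fb y_def by (metis atLeastAtMost_iff image_eqI nonneg order_refl)
      define \<delta> where "\<delta> = (d a y + ?D - d y b) / 2"
      have \<delta>r: "\<delta> \<in> {0..?D}"
      proof -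
        have "d y b \<le> d y a + d a b" "d a y \<le> d a b + d b y" "d a b \<le> d a y + d y b"
          using triangle[OF yM aM bM] triangle[OF aM bM yM] triangle[OF aM yM bM] by auto
        moreover have "d y a = d a y" "d b y = d y b" using commute by auto
        ultimately show ?thesis unfolding \<delta>_def by simp
      qed
      have \<delta>2: "2 * \<delta> = d a y + ?D - d y b" unfolding \<delta>_def by simp
      define z where "z = f \<delta>"
      note gd = geodesic_dists[OF ms f \<delta>r]
      have zM: "z \<in> M" using gd z_def by auto
      have f2: "d y z + d a b \<le> max (d y a + d z b) (d y b + d z a)"
        using fourptD[OF fp yM zM aM bM] .
      have t1: "d a y \<le> d a z + d z y" using triangle[OF aM zM yM] .
      have e: "d z a = d a z" "d y a = d a y" "d y z = d z y" using commute by auto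
      have "d y z + d a b \<le> d y a + d z b \<or> d y z + d a b \<le> d y b + d z a"
        using f2 by (simp only: le_max_iff_disj)
      moreover have gz: "d a z = \<delta>" "d z b = ?D - \<delta>" using gd z_def by auto
      ultimately have "d z y \<le> d a y - \<delta>"
        using e \<delta>2 by (elim disjE) linarith+
      then have dzy: "d z y = d a y - \<delta>" using t1 gz by linarith
      have zy: "z \<noteq> y" using ynot z_def \<delta>r y_def by (metis image_eqI)
      have "t \<noteq> 0" "t \<noteq> 1" using ya yb q0 q1 y_def by auto
      then have t01: "0 < t" "t < 1" using t by auto
      obtain t1 where t1: "t1 \<in> {0..<t}" "q t1 = z"
      proof (cases "z = a")
        case True then show ?thesis using that[of 0] t01 q0 by auto
      next
        case False
        have "z \<in> q ` {0..t}"
        proof (rule separation[OF ms fp zM aM yM False zy])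
          show "d a z + d z y = d a y" using dzy gd z_def by simp
          show "connectedin mtopology (q ` {0..t})" using path_piece_connected[OF q] t by auto
          show "a \<in> q ` {0..t}" "y \<in> q ` {0..t}" using q0 t01 y_def by force+
        qed
        then obtain t1 where "t1 \<in> {0..t}" "q t1 = z" by auto
        moreover have "t1 \<noteq> t" using calculation zy y_def by auto
        ultimately show ?thesis using that[of t1] by auto
      qed
      obtain t2 where t2: "t2 \<in> {t<..1}" "q t2 = z"
      proof (cases "z = b")
        case True then show ?thesis using that[of 1] t01 q1 by auto
      next
        case False
        have zy': "z \<noteq> y" using zy .
        have "z \<in> q ` {t..1}"
        proof (rule separation[OF ms fp zM yM bM zy' False])
          show "d y z + d z b = d y b" using dzy gd z_def commute[of y z] unfolding \<delta>_def by simp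
          show "connectedin mtopology (q ` {t..1})" using path_piece_connected[OF q] t by auto
          show "y \<in> q ` {t..1}" "b \<in> q ` {t..1}" using q1 t01 y_def by force+
        qed
        then obtain t2 where "t2 \<in> {t..1}" "q t2 = z" by auto
        moreover have "t2 \<noteq> t" using calculation zy y_def by auto
        ultimately show ?thesis using that[of t2] by auto
      qed
      have "t1 = t2" using inj t1 t2 t unfolding inj_on_def by auto
      then show False using t1 t2 by auto
    qed
  qed
qed

lemma real_treeI:
  assumes ms: "Metric_space M d" and fp: "fourpt M d"
    and btw: "\<And>a b \<delta>. a \<in> M \<Longrightarrow> b \<in> M \<Longrightarrow> 0 \<le> \<delta> \<Longrightarrow> \<delta> \<le> d a b \<Longrightarrow>
                 \<exists>z\<in>M. d a z = \<delta> \<and> d z b = d a b - \<delta>"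
  shows "real_tree M d"
proof -
  interpret Metric_space M d by (rule ms)
  have ex: "\<exists>f. geodesic M d a b f" if aM: "a \<in> M" and bM: "b \<in> M" for a b
  proof -
    define f where "f \<delta> = (SOME z. z \<in> M \<and> d a z = \<delta> \<and> d z b = d a b - \<delta>)" for \<delta>
    have fP: "f \<delta> \<in> M \<and> d a (f \<delta>) = \<delta> \<and> d (f \<delta>) b = d a b - \<delta>" if "\<delta> \<in> {0..d a b}" for \<delta>
      unfolding f_def by (rule someI_ex) (use btw[OF aM bM] that in auto)
    have "geodesic M d a b f"
      unfolding geodesic_def
    proof (intro conjI ballI)
      show "f ` {0..d a b} \<subseteq> M" using fP by auto
      show "f 0 = a" using fP[of 0] aM by auto
      show "f (d a b) = b" using fP[of "d a b"] bM by auto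
      fix s t assume "s \<in> {0..d a b}" "t \<in> {0..d a b}"
      then show "d (f s) (f t) = \<bar>s - t\<bar>"
        using between_dist[OF ms fp aM bM, of "f s" "f t" s t] fP by auto
    qed
    then show ?thesis by blast
  qed
  show ?thesis
    unfolding real_tree_def
    using ms ex geodesic_unique[OF ms fp] arc_image[OF ms fp] by blast
qed


definition pseudo_on :: "real set \<Rightarrow> (real \<Rightarrow> real \<Rightarrow> real) \<Rightarrow> bool" where
  "pseudo_on S dd \<longleftrightarrow> (\<forall>s\<in>S. dd s s = 0) \<and> (\<forall>s\<in>S. \<forall>t\<in>S. dd s t = dd t s) \<and>
     (\<forall>s\<in>S. \<forall>t\<in>S. \<forall>u\<in>S. dd s u \<le> dd s t + dd t u)"

lemma open_in_borel_of: "openin X U \<Longrightarrow> U \<in> sets (borel_of X)"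
  unfolding borel_of_def
  by (subst sets_measure_of) (auto dest: openin_subset)

lemma space_borel_of: "space (borel_of X) = topspace X"
  unfolding borel_of_def by (subst space_measure_of) (auto dest: openin_subset)

lemma emeasure_lebesgue_Icc: "(a::real) \<le> b \<Longrightarrow> emeasure lebesgue {a..b} = ennreal (b - a)"
  by (subst emeasure_completion) auto

context
  fixes \<zeta> :: real and dd :: "real \<Rightarrow> real \<Rightarrow> real"
  assumes ps: "pseudo_on {0..\<zeta>} dd"
begin

lemma ps_refl: "s \<in> {0..\<zeta>} \<Longrightarrow> dd s s = 0"
  using ps unfolding pseudo_on_def by blast
lemma ps_sym: "s \<in> {0..\<zeta>} \<Longrightarrow> t \<in> {0..\<zeta>} \<Longrightarrow> dd s t = dd t s"
  using ps unfolding pseudo_on_def by blast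
lemma ps_tri: "s \<in> {0..\<zeta>} \<Longrightarrow> t \<in> {0..\<zeta>} \<Longrightarrow> u \<in> {0..\<zeta>} \<Longrightarrow> dd s u \<le> dd s t + dd t u"
  using ps unfolding pseudo_on_def by blast
lemma ps_nonneg: "s \<in> {0..\<zeta>} \<Longrightarrow> t \<in> {0..\<zeta>} \<Longrightarrow> 0 \<le> dd s t"
  using ps_tri[of s t s] ps_refl[of s] ps_sym[of s t] by linarith

lemma qclass_self: "s \<in> {0..\<zeta>} \<Longrightarrow> s \<in> qclass \<zeta> dd s"
  unfolding qclass_def using ps_refl by auto

lemma qclass_eq_iff: "s \<in> {0..\<zeta>} \<Longrightarrow> t \<in> {0..\<zeta>} \<Longrightarrow> qclass \<zeta> dd s = qclass \<zeta> dd t \<longleftrightarrow> dd s t = 0"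
proof
  assume s: "s \<in> {0..\<zeta>}" and t: "t \<in> {0..\<zeta>}"
  {
    assume "qclass \<zeta> dd s = qclass \<zeta> dd t"
    then have "t \<in> qclass \<zeta> dd s" using qclass_self[OF t] by simp
    then show "dd s t = 0" unfolding qclass_def by auto
  }
  {
    assume 0: "dd s t = 0"
    show "qclass \<zeta> dd s = qclass \<zeta> dd t"
      unfolding qclass_def
    proof (intro Collect_cong conj_cong refl iffI)
      fix u assume u: "u \<in> {0..\<zeta>}"
      show "dd t u = 0" if "dd s u = 0"
        using ps_tri[OF t s u] ps_sym[OF s t] 0 that ps_nonneg[OF t u] by linarith
      show "dd s u = 0" if "dd t u = 0"
        using ps_tri[OF s t u] 0 that ps_nonneg[OF s u] by linarith
    qed
  }
qed

lemma qspaceE: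
  assumes "A \<in> qspace \<zeta> dd"
  obtains s where "s \<in> {0..\<zeta>}" "A = qclass \<zeta> dd s"
  using assms unfolding qspace_def by auto

lemma qclass_in: "s \<in> {0..\<zeta>} \<Longrightarrow> qclass \<zeta> dd s \<in> qspace \<zeta> dd"
  unfolding qspace_def by auto

lemma qdist_qclass:
  assumes s: "s \<in> {0..\<zeta>}" and t: "t \<in> {0..\<zeta>}"
  shows "qdist \<zeta> dd (qclass \<zeta> dd s) (qclass \<zeta> dd t) = dd s t"
proof -
  define s' where "s' = (SOME x. x \<in> qclass \<zeta> dd s)"
  define t' where "t' = (SOME x. x \<in> qclass \<zeta> dd t)"
  have "s' \<in> qclass \<zeta> dd s" unfolding s'_def using qclass_self[OF s] by (rule someI)
  then have s': "s' \<in> {0..\<zeta>}" "dd s s' = 0" unfolding qclass_def by auto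
  have "t' \<in> qclass \<zeta> dd t" unfolding t'_def using qclass_self[OF t] by (rule someI)
  then have t': "t' \<in> {0..\<zeta>}" "dd t t' = 0" unfolding qclass_def by auto
  have "dd s' t' \<le> dd s' s + dd s t'" "dd s t' \<le> dd s t + dd t t'"
    "dd s t \<le> dd s s' + dd s' t" "dd s' t \<le> dd s' t' + dd t' t"
    using ps_tri s t s' t' by blast+
  moreover have "dd s' s = 0" "dd t' t = 0" using ps_sym s t s' t' by auto
  ultimately have "dd s' t' = dd s t" using s' t' by linarith
  then show ?thesis unfolding qdist_def s'_def t'_def using qclass_in s t by auto
qed

lemma qdist_out: "A \<notin> qspace \<zeta> dd \<or> B \<notin> qspace \<zeta> dd \<Longrightarrow> qdist \<zeta> dd A B = 0"
  unfolding qdist_def by auto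

lemma q_metric: "Metric_space (qspace \<zeta> dd) (qdist \<zeta> dd)"
proof
  fix A B
  show "0 \<le> qdist \<zeta> dd A B"
  proof (cases "A \<in> qspace \<zeta> dd \<and> B \<in> qspace \<zeta> dd")
    case True
    then obtain s t where "s \<in> {0..\<zeta>}" "t \<in> {0..\<zeta>}" "A = qclass \<zeta> dd s" "B = qclass \<zeta> dd t"
      by (meson qspaceE)
    then show ?thesis using qdist_qclass ps_nonneg by simp
  qed (use qdist_out in auto)
  show "qdist \<zeta> dd A B = qdist \<zeta> dd B A"
  proof (cases "A \<in> qspace \<zeta> dd \<and> B \<in> qspace \<zeta> dd")
    case True
    then obtain s t where "s \<in> {0..\<zeta>}" "t \<in> {0..\<zeta>}" "A = qclass \<zeta> dd s" "B = qclass \<zeta> dd t"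
      by (meson qspaceE)
    then show ?thesis using qdist_qclass ps_sym by simp
  qed (use qdist_out in auto)
next
  fix A B assume "A \<in> qspace \<zeta> dd" "B \<in> qspace \<zeta> dd"
  then obtain s t where "s \<in> {0..\<zeta>}" "t \<in> {0..\<zeta>}" "A = qclass \<zeta> dd s" "B = qclass \<zeta> dd t"
    by (meson qspaceE)
  then show "(qdist \<zeta> dd A B = 0) = (A = B)" using qdist_qclass qclass_eq_iff by simp
next
  fix A B C assume "A \<in> qspace \<zeta> dd" "B \<in> qspace \<zeta> dd" "C \<in> qspace \<zeta> dd"
  then obtain s t u where "s \<in> {0..\<zeta>}" "t \<in> {0..\<zeta>}" "u \<in> {0..\<zeta>}"
    "A = qclass \<zeta> dd s" "B = qclass \<zeta> dd t" "C = qclass \<zeta> dd u"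
    by (meson qspaceE)
  then show "qdist \<zeta> dd A C \<le> qdist \<zeta> dd A B + qdist \<zeta> dd B C" using qdist_qclass ps_tri by simp
qed

lemma q_fourpt:
  assumes "\<And>x y z t. x \<in> {0..\<zeta>} \<Longrightarrow> y \<in> {0..\<zeta>} \<Longrightarrow> z \<in> {0..\<zeta>} \<Longrightarrow> t \<in> {0..\<zeta>} \<Longrightarrow>
      dd x y + dd z t \<le> max (dd x z + dd y t) (dd x t + dd y z)"
  shows "fourpt (qspace \<zeta> dd) (qdist \<zeta> dd)"
  unfolding fourpt_def
proof (intro ballI)
  fix A B C D assume "A \<in> qspace \<zeta> dd" "B \<in> qspace \<zeta> dd" "C \<in> qspace \<zeta> dd" "D \<in> qspace \<zeta> dd"
  then obtain x y z t where "x \<in> {0..\<zeta>}" "y \<in> {0..\<zeta>}" "z \<in> {0..\<zeta>}" "t \<in> {0..\<zeta>}"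
    "A = qclass \<zeta> dd x" "B = qclass \<zeta> dd y" "C = qclass \<zeta> dd z" "D = qclass \<zeta> dd t"
    by (meson qspaceE)
  then show "qdist \<zeta> dd A B + qdist \<zeta> dd C D
      \<le> max (qdist \<zeta> dd A C + qdist \<zeta> dd B D) (qdist \<zeta> dd A D + qdist \<zeta> dd B C)"
    using qdist_qclass assms by simp
qed

lemma q_between:
  assumes "\<And>s1 s2 \<delta>. s1 \<in> {0..\<zeta>} \<Longrightarrow> s2 \<in> {0..\<zeta>} \<Longrightarrow> 0 \<le> \<delta> \<Longrightarrow> \<delta> \<le> dd s1 s2 \<Longrightarrow>
      \<exists>\<sigma>\<in>{0..\<zeta>}. dd s1 \<sigma> = \<delta> \<and> dd \<sigma> s2 = dd s1 s2 - \<delta>"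
    and "A \<in> qspace \<zeta> dd" "B \<in> qspace \<zeta> dd" "0 \<le> \<delta>" "\<delta> \<le> qdist \<zeta> dd A B"
  shows "\<exists>Z\<in>qspace \<zeta> dd. qdist \<zeta> dd A Z = \<delta> \<and> qdist \<zeta> dd Z B = qdist \<zeta> dd A B - \<delta>"
proof -
  obtain s t where st: "s \<in> {0..\<zeta>}" "t \<in> {0..\<zeta>}" "A = qclass \<zeta> dd s" "B = qclass \<zeta> dd t"
    using assms(2,3) by (meson qspaceE)
  then obtain \<sigma> where "\<sigma> \<in> {0..\<zeta>}" "dd s \<sigma> = \<delta>" "dd \<sigma> t = dd s t - \<delta>"
    using assms(1)[of s t \<delta>] assms(4,5) qdist_qclass by auto
  then show ?thesis using st qdist_qclass qclass_in by (intro bexI[of _ "qclass \<zeta> dd \<sigma>"]) auto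
qed


lemma q_cont_map:
  assumes cont: "\<And>s0 e. s0 \<in> {0..\<zeta>} \<Longrightarrow> e > 0 \<Longrightarrow> \<exists>\<delta>>0. \<forall>s\<in>{0..\<zeta>}. \<bar>s - s0\<bar> < \<delta> \<longrightarrow> dd s0 s < e"
  shows "continuous_map (top_of_set {0..\<zeta>}) (Metric_space.mtopology (qspace \<zeta> dd) (qdist \<zeta> dd)) (qclass \<zeta> dd)"
proof -
  interpret Metric_space "qspace \<zeta> dd" "qdist \<zeta> dd" by (rule q_metric)
  show ?thesis
    unfolding continuous_map_to_metric
  proof (intro ballI allI impI)
    fix x e assume x: "x \<in> topspace (top_of_set {0..\<zeta>})" and e: "(e::real) > 0"
    then have x': "x \<in> {0..\<zeta>}" by simp
    obtain \<delta> where \<delta>: "\<delta> > 0" "\<forall>s\<in>{0..\<zeta>}. \<bar>s - x\<bar> < \<delta> \<longrightarrow> dd x s < e"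
      using cont[OF x' e] by blast
    show "\<exists>U. openin (top_of_set {0..\<zeta>}) U \<and> x \<in> U \<and> (\<forall>y\<in>U. qclass \<zeta> dd y \<in> mball (qclass \<zeta> dd x) e)"
    proof (intro exI conjI ballI)
      show "openin (top_of_set {0..\<zeta>}) ({0..\<zeta>} \<inter> ball x \<delta>)" by (rule openin_open_Int) simp
      show "x \<in> {0..\<zeta>} \<inter> ball x \<delta>" using x' \<delta> by simp
      fix y assume "y \<in> {0..\<zeta>} \<inter> ball x \<delta>"
      then have y: "y \<in> {0..\<zeta>}" "\<bar>y - x\<bar> < \<delta>" by (auto simp: dist_real_def)
      then show "qclass \<zeta> dd y \<in> mball (qclass \<zeta> dd x) e"
        using \<delta> qdist_qclass[OF x' y(1)] qclass_in x' by auto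
    qed
  qed
qed

lemma q_compact:
  assumes cm: "continuous_map (top_of_set {0..\<zeta>}) (Metric_space.mtopology (qspace \<zeta> dd) (qdist \<zeta> dd)) (qclass \<zeta> dd)"
  shows "compact_space (Metric_space.mtopology (qspace \<zeta> dd) (qdist \<zeta> dd))"
proof -
  interpret Metric_space "qspace \<zeta> dd" "qdist \<zeta> dd" by (rule q_metric)
  have "compactin (top_of_set {0..\<zeta>}) {0..\<zeta>}" by (simp add: compactin_subtopology)
  from image_compactin[OF this cm] have "compactin mtopology (qspace \<zeta> dd)"
    unfolding qspace_def by simp
  then show ?thesis unfolding compact_space_def by simp
qed

lemma q_measurable:
  assumes cm: "continuous_map (top_of_set {0..\<zeta>}) (Metric_space.mtopology (qspace \<zeta> dd) (qdist \<zeta> dd)) (qclass \<zeta> dd)"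
  shows "qclass \<zeta> dd \<in> measurable (restrict_space lebesgue {0..\<zeta>}) (borel_of (Metric_space.mtopology (qspace \<zeta> dd) (qdist \<zeta> dd)))"
proof -
  interpret Metric_space "qspace \<zeta> dd" "qdist \<zeta> dd" by (rule q_metric)
  show ?thesis
    unfolding borel_of_def
  proof (rule measurable_measure_of)
    show "{U. openin mtopology U} \<subseteq> Pow (topspace mtopology)" using openin_mtopology by auto
    show "qclass \<zeta> dd \<in> space (restrict_space lebesgue {0..\<zeta>}) \<rightarrow> topspace mtopology"
      using qclass_in by (auto simp: space_restrict_space)
    fix U assume "U \<in> {U. openin mtopology U}"
    then have "openin (top_of_set {0..\<zeta>}) {x \<in> topspace (top_of_set {0..\<zeta>}). qclass \<zeta> dd x \<in> U}"
      using cm unfolding continuous_map by blast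
    then have "openin (top_of_set {0..\<zeta>}) (qclass \<zeta> dd -` U \<inter> {0..\<zeta>})"
    proof -
      have "{x \<in> topspace (top_of_set {0..\<zeta>}). qclass \<zeta> dd x \<in> U} = qclass \<zeta> dd -` U \<inter> {0..\<zeta>}" by auto
      then show ?thesis using \<open>openin (top_of_set {0..\<zeta>}) _\<close> by simp
    qed
    then have "qclass \<zeta> dd -` U \<inter> {0..\<zeta>} \<in> sets lebesgue"
      by (rule lebesgue_openin) simp
    then show "qclass \<zeta> dd -` U \<inter> space (restrict_space lebesgue {0..\<zeta>}) \<in> sets (restrict_space lebesgue {0..\<zeta>})"
      by (auto simp: space_restrict_space sets_restrict_space_iff)
  qed
qed

lemma q_emeasure:
  assumes meas: "qclass \<zeta> dd \<in> measurable (restrict_space lebesgue {0..\<zeta>}) (borel_of (Metric_space.mtopology (qspace \<zeta> dd) (qdist \<zeta> dd)))"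
    and A: "A \<in> sets (borel_of (Metric_space.mtopology (qspace \<zeta> dd) (qdist \<zeta> dd)))"
  shows "emeasure (qmeasure \<zeta> dd) A = emeasure lebesgue (qclass \<zeta> dd -` A \<inter> {0..\<zeta>})"
proof -
  have "emeasure (qmeasure \<zeta> dd) A = emeasure (restrict_space lebesgue {0..\<zeta>}) (qclass \<zeta> dd -` A \<inter> {0..\<zeta>})"
    unfolding qmeasure_def using emeasure_distr[OF meas A] by (simp add: space_restrict_space)
  also have "\<dots> = emeasure lebesgue (qclass \<zeta> dd -` A \<inter> {0..\<zeta>})"
    by (rule emeasure_restrict_space) auto
  finally show ?thesis .
qed


lemma q_finite:
  assumes meas: "qclass \<zeta> dd \<in> measurable (restrict_space lebesgue {0..\<zeta>}) (borel_of (Metric_space.mtopology (qspace \<zeta> dd) (qdist \<zeta> dd)))"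
  and z: "\<zeta> > 0"
  shows "finite_measure (qmeasure \<zeta> dd)"
proof
  interpret Metric_space "qspace \<zeta> dd" "qdist \<zeta> dd" by (rule q_metric)
  have sp: "space (qmeasure \<zeta> dd) = qspace \<zeta> dd" unfolding qmeasure_def by (simp add: space_borel_of)
  have "emeasure (qmeasure \<zeta> dd) (qspace \<zeta> dd) = emeasure lebesgue (qclass \<zeta> dd -` qspace \<zeta> dd \<inter> {0..\<zeta>})"
  proof (rule q_emeasure[OF meas])
    show "qspace \<zeta> dd \<in> sets (borel_of mtopology)"
      using open_in_borel_of[OF openin_topspace[of mtopology]] by simp
  qed
  also have "qclass \<zeta> dd -` qspace \<zeta> dd \<inter> {0..\<zeta>} = {0..\<zeta>}" using qclass_in by auto
  finally show "emeasure (qmeasure \<zeta> dd) (space (qmeasure \<zeta> dd)) \<noteq> \<infinity>"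
    using sp z emeasure_lebesgue_Icc[of 0 \<zeta>] by simp
qed

lemma q_support:
  assumes cm: "continuous_map (top_of_set {0..\<zeta>}) (Metric_space.mtopology (qspace \<zeta> dd) (qdist \<zeta> dd)) (qclass \<zeta> dd)"
  and meas: "qclass \<zeta> dd \<in> measurable (restrict_space lebesgue {0..\<zeta>}) (borel_of (Metric_space.mtopology (qspace \<zeta> dd) (qdist \<zeta> dd)))"
  and z: "\<zeta> > 0"
  shows "msupport (qspace \<zeta> dd) (qdist \<zeta> dd) (qmeasure \<zeta> dd) = qspace \<zeta> dd"
proof -
  interpret Metric_space "qspace \<zeta> dd" "qdist \<zeta> dd" by (rule q_metric)
  have "emeasure (qmeasure \<zeta> dd) U > 0" if x: "x \<in> qspace \<zeta> dd" and U: "openin mtopology U" "x \<in> U" for x U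
  proof -
    obtain s where s: "s \<in> {0..\<zeta>}" "x = qclass \<zeta> dd s" using x by (meson qspaceE)
    have "openin (top_of_set {0..\<zeta>}) {y \<in> topspace (top_of_set {0..\<zeta>}). qclass \<zeta> dd y \<in> U}"
      using cm U unfolding continuous_map by blast
    moreover have "{y \<in> topspace (top_of_set {0..\<zeta>}). qclass \<zeta> dd y \<in> U} = qclass \<zeta> dd -` U \<inter> {0..\<zeta>}" by auto
    ultimately have op: "openin (top_of_set {0..\<zeta>}) (qclass \<zeta> dd -` U \<inter> {0..\<zeta>})" by simp
    then obtain T where T: "open T" "qclass \<zeta> dd -` U \<inter> {0..\<zeta>} = {0..\<zeta>} \<inter> T"
      unfolding openin_open by blast
    have "s \<in> qclass \<zeta> dd -` U \<inter> {0..\<zeta>}" using s U by simp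
    then have "s \<in> T" unfolding T(2) by simp
    then obtain e where e: "e > 0" "ball s e \<subseteq> T" using T(1) open_contains_ball by blast
    define a where "a = max 0 (s - e/2)"
    define b where "b = min \<zeta> (s + e/2)"
    have ab: "a < b" using s z e unfolding a_def b_def by auto
    have sub: "{a..b} \<subseteq> qclass \<zeta> dd -` U \<inter> {0..\<zeta>}"
    proof
      fix y assume "y \<in> {a..b}"
      then have "y \<in> {0..\<zeta>}" "dist s y < e" using e unfolding a_def b_def by (auto simp: dist_real_def)
      moreover then have "y \<in> T" using e(2) by (auto simp: mem_ball)
      ultimately show "y \<in> qclass \<zeta> dd -` U \<inter> {0..\<zeta>}" unfolding T(2) by simp
    qed
    have mP: "qclass \<zeta> dd -` U \<inter> {0..\<zeta>} \<in> sets lebesgue" using op by (rule lebesgue_openin) simp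
    have "0 < emeasure lebesgue {a..b}" using ab emeasure_lebesgue_Icc[of a b] by simp
    also have "\<dots> \<le> emeasure lebesgue (qclass \<zeta> dd -` U \<inter> {0..\<zeta>})"
      by (rule emeasure_mono[OF sub mP])
    also have "\<dots> = emeasure (qmeasure \<zeta> dd) U"
      using q_emeasure[OF meas open_in_borel_of[OF U(1)]] by simp
    finally show ?thesis .
  qed
  then show ?thesis unfolding msupport_def by auto
qed

end


lemma inf_attain:
  fixes f :: "real \<Rightarrow> real"
  assumes "continuous_on {a..b} f" "a \<le> b"
  shows "\<exists>r\<in>{a..b}. Inf (f ` {a..b}) = f r \<and> (\<forall>x\<in>{a..b}. f r \<le> f x)"
proof -
  obtain r where r: "r \<in> {a..b}" "\<forall>y\<in>{a..b}. f r \<le> f y"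
    using continuous_attains_inf[of "{a..b}" f] assms by auto
  then have "Inf (f ` {a..b}) = f r" by (intro cInf_eq_minimum) auto
  then show ?thesis using r by blast
qed

lemma inf_le:
  fixes f :: "real \<Rightarrow> real"
  assumes "continuous_on {a..b} f" "x \<in> {a..b}"
  shows "Inf (f ` {a..b}) \<le> f x"
proof -
  obtain r where "r \<in> {a..b}" "Inf (f ` {a..b}) = f r" "\<forall>x\<in>{a..b}. f r \<le> f x"
    using inf_attain[OF assms(1)] assms(2) by auto
  then show ?thesis using assms(2) by auto
qed

lemma inf_ge:
  fixes f :: "real \<Rightarrow> real"
  assumes "a \<le> b" "\<And>x. x \<in> {a..b} \<Longrightarrow> c \<le> f x"
  shows "c \<le> Inf (f ` {a..b})"
  using assms by (intro cInf_greatest) auto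

lemma inf_split:
  fixes f :: "real \<Rightarrow> real"
  assumes "continuous_on {a..c} f" "a \<le> b" "b \<le> c"
  shows "Inf (f ` {a..c}) = min (Inf (f ` {a..b})) (Inf (f ` {b..c}))"
proof -
  have c1: "continuous_on {a..b} f" "continuous_on {b..c} f"
    using assms by (auto intro: continuous_on_subset)
  obtain r where r: "r \<in> {a..c}" "Inf (f ` {a..c}) = f r" "\<forall>x\<in>{a..c}. f r \<le> f x"
    using inf_attain[OF assms(1)] assms by auto
  have "f r \<le> Inf (f ` {a..b})" using r assms by (intro inf_ge) auto
  moreover have "f r \<le> Inf (f ` {b..c})" using r assms by (intro inf_ge) auto
  moreover have "Inf (f ` {a..b}) \<le> f r \<or> Inf (f ` {b..c}) \<le> f r"
  proof (cases "r \<le> b")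
    case True then show ?thesis using inf_le[OF c1(1), of r] r by auto
  next
    case False then show ?thesis using inf_le[OF c1(2), of r] r by auto
  qed
  ultimately show ?thesis using r by linarith
qed

lemma inf_single: "Inf (f ` {a..a::real}) = (f a :: real)"
proof -
  have "f ` {a..a} = {f a}" by auto
  then show ?thesis by simp
qed

lemma inf_cong: "(\<And>x. x \<in> {a..b} \<Longrightarrow> f x = g x) \<Longrightarrow> Inf (f ` {a..b}) = Inf (g ` {a..b})"
  by (metis image_cong)

lemma inf_bound:
  fixes f :: "real \<Rightarrow> real"
  assumes "continuous_on {a..b} f" "a \<le> b" "\<And>x. x \<in> {a..b} \<Longrightarrow> \<bar>f x - c\<bar> \<le> e"
  shows "\<bar>Inf (f ` {a..b}) - c\<bar> \<le> e"
proof -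
  obtain r where r: "r \<in> {a..b}" "Inf (f ` {a..b}) = f r"
    using inf_attain[OF assms(1,2)] by auto
  then show ?thesis using assms(3) by auto
qed

locale snk =
  fixes \<zeta> :: real and h :: "real \<Rightarrow> real" and w :: "real \<Rightarrow> real \<Rightarrow> real"
  assumes hc: "continuous_on {0..\<zeta>} h"
    and hnn: "\<And>s. s \<in> {0..\<zeta>} \<Longrightarrow> 0 \<le> h s"
    and wc: "\<And>s. s \<in> {0..\<zeta>} \<Longrightarrow> continuous_on {0..} (w s)"
    and cons: "\<And>s1 s2 r. s1 \<in> {0..\<zeta>} \<Longrightarrow> s2 \<in> {0..\<zeta>} \<Longrightarrow> r \<in> {0..mh h s1 s2} \<Longrightarrow> w s1 r = w s2 r"
begin

abbreviation "S \<equiv> {0..\<zeta>}"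

lemma wc': "s \<in> S \<Longrightarrow> 0 \<le> a \<Longrightarrow> continuous_on {a..b} (w s)"
  using wc by (rule continuous_on_subset) auto

lemma mh_sym: "mh h s1 s2 = mh h s2 s1"
  unfolding mh_def by (simp add: min.commute max.commute)

lemma mh_attain:
  assumes "s1 \<in> S" "s2 \<in> S"
  shows "\<exists>r\<in>{min s1 s2..max s1 s2}. mh h s1 s2 = h r \<and> (\<forall>x\<in>{min s1 s2..max s1 s2}. h r \<le> h x)"
  unfolding mh_def
proof (rule inf_attain)
  show "continuous_on {min s1 s2..max s1 s2} h"
    by (rule continuous_on_subset[OF hc]) (use assms in auto)
qed simp

lemma mh_le_h: "s1 \<in> S \<Longrightarrow> s2 \<in> S \<Longrightarrow> x \<in> {min s1 s2..max s1 s2} \<Longrightarrow> mh h s1 s2 \<le> h x"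
  using mh_attain by metis

lemma mh_le1: "s1 \<in> S \<Longrightarrow> s2 \<in> S \<Longrightarrow> mh h s1 s2 \<le> h s1"
  by (rule mh_le_h) auto
lemma mh_le2: "s1 \<in> S \<Longrightarrow> s2 \<in> S \<Longrightarrow> mh h s1 s2 \<le> h s2"
  by (rule mh_le_h) auto
lemma mh_nn: "s1 \<in> S \<Longrightarrow> s2 \<in> S \<Longrightarrow> 0 \<le> mh h s1 s2"
proof -
  assume s: "s1 \<in> S" "s2 \<in> S"
  then obtain r where "r \<in> {min s1 s2..max s1 s2}" "mh h s1 s2 = h r" using mh_attain by blast
  moreover have "r \<in> S" using calculation(1) s by auto
  ultimately show ?thesis using hnn by simp
qed
lemma mh_self: "mh h s s = h s"
  unfolding mh_def by simp

lemma mh_ultra: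
  assumes "s1 \<in> S" "s2 \<in> S" "s3 \<in> S"
  shows "min (mh h s1 s3) (mh h s3 s2) \<le> mh h s1 s2"
proof -
  obtain r where r: "r \<in> {min s1 s2..max s1 s2}" "mh h s1 s2 = h r"
    using mh_attain[OF assms(1,2)] by auto
  have "r \<in> {min s1 s3..max s1 s3} \<or> r \<in> {min s3 s2..max s3 s2}" using r(1) by auto
  then show ?thesis
    using mh_le_h[OF assms(1,3), of r] mh_le_h[OF assms(3,2), of r] r by auto
qed

definition J :: "real \<Rightarrow> real \<Rightarrow> real" where
  "J s a = Inf (w s ` {a..h s})"

definition P :: "real \<Rightarrow> real \<Rightarrow> real" where
  "P s1 s2 = min (J s1 (mh h s1 s2)) (J s2 (mh h s1 s2))"

lemma dhw_P: "dhw h w s1 s2 = w s1 (h s1) + w s2 (h s2) - 2 * P s1 s2"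
  unfolding dhw_def P_def J_def by simp

lemma P_sym: "P s1 s2 = P s2 s1"
  unfolding P_def by (simp add: mh_sym min.commute)

lemma J_split: "s \<in> S \<Longrightarrow> 0 \<le> a \<Longrightarrow> a \<le> b \<Longrightarrow> b \<le> h s \<Longrightarrow>
    J s a = min (Inf (w s ` {a..b})) (J s b)"
  unfolding J_def by (rule inf_split[OF wc']) auto

lemma J_le: "s \<in> S \<Longrightarrow> 0 \<le> a \<Longrightarrow> x \<in> {a..h s} \<Longrightarrow> J s a \<le> w s x"
  unfolding J_def by (rule inf_le[OF wc']) auto

lemma P_le_J1: "P s1 s2 \<le> J s1 (mh h s1 s2)" unfolding P_def by simp
lemma P_le_J2: "P s1 s2 \<le> J s2 (mh h s1 s2)" unfolding P_def by simp

lemma P_self: "s \<in> S \<Longrightarrow> P s s = w s (h s)"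
  unfolding P_def J_def by (simp add: mh_self inf_single)

lemma P_le_tip: "s1 \<in> S \<Longrightarrow> s2 \<in> S \<Longrightarrow> P s1 s2 \<le> w s1 (h s1)"
proof -
  assume s: "s1 \<in> S" "s2 \<in> S"
  have "J s1 (mh h s1 s2) \<le> w s1 (h s1)"
    by (rule J_le) (use s mh_le1 mh_nn in auto)
  then show ?thesis using P_le_J1[of s1 s2] by simp
qed

lemma inf_cons: "s1 \<in> S \<Longrightarrow> s2 \<in> S \<Longrightarrow> 0 \<le> a \<Longrightarrow> b \<le> mh h s1 s2 \<Longrightarrow>
   Inf (w s1 ` {a..b}) = Inf (w s2 ` {a..b})"
  by (rule inf_cong) (use cons in auto)

lemma P_ultra_A:
  assumes s: "s1 \<in> S" "s2 \<in> S" "s3 \<in> S"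
    and eq: "mh h s1 s3 = mh h s2 s3" and le: "mh h s1 s3 \<le> mh h s1 s2"
  shows "min (P s1 s3) (P s3 s2) \<le> P s1 s2"
proof -
  let ?mu = "mh h s1 s3" and ?m = "mh h s1 s2"
  have "J s1 ?mu \<le> J s1 ?m"
    using J_split[OF s(1), of ?mu ?m] le mh_nn[OF s(1,3)] mh_le1[OF s(1,2)] by simp
  moreover have "J s2 ?mu \<le> J s2 ?m"
    using J_split[OF s(2), of ?mu ?m] le mh_nn[OF s(1,3)] mh_le2[OF s(1,2)] by simp
  moreover have "P s1 s3 \<le> J s1 ?mu" by (rule P_le_J1)
  moreover have "P s3 s2 \<le> J s2 ?mu" using P_le_J2[of s3 s2] eq mh_sym[of s3 s2] by simp
  ultimately show ?thesis unfolding P_def[of s1 s2] by linarith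
qed

lemma P_ultra_B:
  assumes s: "s1 \<in> S" "s2 \<in> S" "s3 \<in> S"
    and eq: "mh h s1 s2 = mh h s2 s3" and le: "mh h s1 s2 \<le> mh h s1 s3"
  shows "min (P s1 s3) (P s3 s2) \<le> P s1 s2"
proof -
  let ?mu = "mh h s1 s2" and ?m = "mh h s1 s3"
  have m0: "0 \<le> ?mu" using mh_nn[OF s(1,2)] .
  have J1: "J s1 ?mu = min (Inf (w s1 ` {?mu..?m})) (J s1 ?m)"
    using J_split[OF s(1) m0 le] mh_le1[OF s(1,3)] by simp
  have J3: "J s3 ?mu = min (Inf (w s3 ` {?mu..?m})) (J s3 ?m)"
    using J_split[OF s(3) m0 le] mh_le2[OF s(1,3)] by simp
  have ic: "Inf (w s1 ` {?mu..?m}) = Inf (w s3 ` {?mu..?m})"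
    by (rule inf_cons[OF s(1,3) m0]) simp
  have "P s1 s3 \<le> J s1 ?m" by (rule P_le_J1)
  moreover have "P s3 s2 \<le> J s3 ?mu" using P_le_J1[of s3 s2] eq mh_sym[of s3 s2] by simp
  moreover have "P s3 s2 \<le> J s2 ?mu" using P_le_J2[of s3 s2] eq mh_sym[of s3 s2] by simp
  ultimately show ?thesis unfolding P_def[of s1 s2] using J1 J3 ic by linarith
qed

lemma P_ultra:
  assumes s: "s1 \<in> S" "s2 \<in> S" "s3 \<in> S"
  shows "min (P s1 s3) (P s3 s2) \<le> P s1 s2"
proof -
  have u1: "min (mh h s1 s3) (mh h s3 s2) \<le> mh h s1 s2" using mh_ultra s by blast
  have u2: "min (mh h s1 s2) (mh h s2 s3) \<le> mh h s1 s3" using mh_ultra[of s1 s3 s2] s by blast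
  have u3: "min (mh h s2 s1) (mh h s1 s3) \<le> mh h s2 s3" using mh_ultra[of s2 s3 s1] s by blast
  have sy: "mh h s3 s2 = mh h s2 s3" "mh h s2 s1 = mh h s1 s2" using mh_sym by auto
  consider "mh h s1 s3 = mh h s2 s3 \<and> mh h s1 s3 \<le> mh h s1 s2"
    | "mh h s1 s2 = mh h s2 s3 \<and> mh h s1 s2 \<le> mh h s1 s3"
    | "mh h s1 s2 = mh h s1 s3 \<and> mh h s1 s2 \<le> mh h s2 s3"
    using u1 u2 u3 sy by (auto simp: min_def split: if_splits)
  then show ?thesis
  proof cases
    case 1 then show ?thesis using P_ultra_A[OF s] by blast
  next
    case 2 then show ?thesis using P_ultra_B[OF s] by blast
  next
    case 3
    have "min (P s2 s3) (P s3 s1) \<le> P s2 s1"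
      by (rule P_ultra_B[OF s(2,1,3)]) (use 3 mh_sym in auto)
    then show ?thesis using P_sym by (simp add: min.commute)
  qed
qed

lemma alg4: "\<lbrakk>(a::real) \<ge> min c g; c \<ge> min a g; g \<ge> min a c;
  a \<ge> min f e; f \<ge> min a e; e \<ge> min a f;
  c \<ge> min f b; f \<ge> min c b; b \<ge> min c f;
  g \<ge> min e b; e \<ge> min g b; b \<ge> min g e\<rbrakk> \<Longrightarrow> a + b \<ge> min (c + e) (f + g)"
  by (simp add: min_def split: if_splits)

lemma dhw_fourpt:
  assumes x: "x \<in> S" and y: "y \<in> S" and z: "z \<in> S" and t: "t \<in> S"
  shows "dhw h w x y + dhw h w z t \<le> max (dhw h w x z + dhw h w y t) (dhw h w x t + dhw h w y z)"
proof -
  have sy: "P z y = P y z" "P y x = P x y" "P t y = P y t" "P t z = P z t" "P z x = P x z"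
    using P_sym by auto
  have "min (P x z + P y t) (P x t + P y z) \<le> P x y + P z t"
  proof (rule alg4)
    show "min (P x z) (P y z) \<le> P x y" using P_ultra[OF x y z] sy by simp
    show "min (P x y) (P y z) \<le> P x z" using P_ultra[OF x z y] sy by simp
    show "min (P x y) (P x z) \<le> P y z" using P_ultra[OF y z x] sy by simp
    show "min (P x t) (P y t) \<le> P x y" using P_ultra[OF x y t] sy by simp
    show "min (P x y) (P y t) \<le> P x t" using P_ultra[OF x t y] sy by simp
    show "min (P x y) (P x t) \<le> P y t" using P_ultra[OF y t x] sy by simp
    show "min (P x t) (P z t) \<le> P x z" using P_ultra[OF x z t] sy by simp
    show "min (P x z) (P z t) \<le> P x t" using P_ultra[OF x t z] sy by simp
    show "min (P x z) (P x t) \<le> P z t" using P_ultra[OF z t x] sy by simp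
    show "min (P y t) (P z t) \<le> P y z" using P_ultra[OF y z t] sy by simp
    show "min (P y z) (P z t) \<le> P y t" using P_ultra[OF y t z] sy by simp
    show "min (P y z) (P y t) \<le> P z t" using P_ultra[OF z t y] sy by simp
  qed
  then have "P x z + P y t \<le> P x y + P z t \<or> P x t + P y z \<le> P x y + P z t"
    by (simp add: min_le_iff_disj)
  then show ?thesis unfolding dhw_P le_max_iff_disj by (elim disjE) linarith+
qed

lemma dhw_self: "s \<in> S \<Longrightarrow> dhw h w s s = 0"
  unfolding dhw_P using P_self by simp

lemma dhw_sym: "dhw h w s1 s2 = dhw h w s2 s1"
  unfolding dhw_P using P_sym by simp

lemma dhw_pseudo: "pseudo_on S (dhw h w)"
  unfolding pseudo_on_def
proof (intro conjI ballI)
  fix s assume "s \<in> S" then show "dhw h w s s = 0" by (rule dhw_self)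
next
  fix s t assume "s \<in> S" "t \<in> S" then show "dhw h w s t = dhw h w t s" using dhw_sym by blast
next
  fix s t u assume stu: "s \<in> S" "t \<in> S" "u \<in> S"
  have "dhw h w s u + dhw h w t t \<le> max (dhw h w s t + dhw h w u t) (dhw h w s t + dhw h w u t)"
    using dhw_fourpt[OF stu(1,3,2,2)] .
  then show "dhw h w s u \<le> dhw h w s t + dhw h w t u" using dhw_self[OF stu(2)] dhw_sym[of u t] by simp
qed

end


lemma last_below:
  fixes f :: "real \<Rightarrow> real"
  assumes c: "continuous_on {a..b} f" and r0: "r0 \<in> {a..b}" "f r0 \<le> y" and yb: "y \<le> f b"
  shows "\<exists>\<rho>\<in>{r0..b}. f \<rho> = y \<and> (\<forall>r\<in>{\<rho>..b}. y \<le> f r)"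
proof -
  define R where "R = {a..b} \<inter> f -` {..y}"
  have cl: "closed R" unfolding R_def by (rule continuous_closed_preimage[OF c]) auto
  have ne: "R \<noteq> {}" using r0 unfolding R_def by auto
  have bd: "bdd_above R" unfolding R_def by (auto intro: bdd_aboveI[of _ b])
  define \<rho> where "\<rho> = Sup R"
  have \<rho>R: "\<rho> \<in> R" unfolding \<rho>_def by (rule closed_contains_Sup[OF ne bd cl])
  have up: "r \<le> \<rho>" if "r \<in> R" for r unfolding \<rho>_def by (rule cSup_upper[OF that bd])
  have r0\<rho>: "r0 \<le> \<rho>" using up r0 unfolding R_def by auto
  have \<rho>b: "\<rho> \<le> b" "a \<le> \<rho>" "f \<rho> \<le> y" using \<rho>R unfolding R_def by auto
  obtain x where x: "\<rho> \<le> x" "x \<le> b" "f x = y"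
    using IVT'[of f \<rho> y b] \<rho>b yb continuous_on_subset[OF c, of "{\<rho>..b}"] by auto
  have "x \<in> R" using x \<rho>b unfolding R_def by auto
  then have "x = \<rho>" using up x by force
  then have fy: "f \<rho> = y" using x by simp
  have "y \<le> f r" if "r \<in> {\<rho>..b}" for r
  proof (rule ccontr)
    assume "\<not> y \<le> f r"
    then have "r \<in> R" using that \<rho>b unfolding R_def by auto
    then have "r = \<rho>" using up that by force
    then show False using fy \<open>\<not> y \<le> f r\<close> by simp
  qed
  then show ?thesis using fy r0\<rho> \<rho>b by auto
qed

lemma first_below:
  fixes f :: "real \<Rightarrow> real"
  assumes c: "continuous_on {a..b} f" and r0: "r0 \<in> {a..b}" "f r0 \<le> y" and ya: "y \<le> f a"
  shows "\<exists>\<rho>\<in>{a..r0}. f \<rho> = y \<and> (\<forall>r\<in>{a..\<rho>}. y \<le> f r)"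
proof -
  define R where "R = {a..b} \<inter> f -` {..y}"
  have cl: "closed R" unfolding R_def by (rule continuous_closed_preimage[OF c]) auto
  have ne: "R \<noteq> {}" using r0 unfolding R_def by auto
  have bd: "bdd_below R" unfolding R_def by (auto intro: bdd_belowI[of _ a])
  define \<rho> where "\<rho> = Inf R"
  have \<rho>R: "\<rho> \<in> R" unfolding \<rho>_def by (rule closed_contains_Inf[OF ne bd cl])
  have lo: "\<rho> \<le> r" if "r \<in> R" for r unfolding \<rho>_def by (rule cInf_lower[OF that bd])
  have r0\<rho>: "\<rho> \<le> r0" using lo r0 unfolding R_def by auto
  have \<rho>b: "\<rho> \<le> b" "a \<le> \<rho>" "f \<rho> \<le> y" using \<rho>R unfolding R_def by auto
  obtain x where x: "a \<le> x" "x \<le> \<rho>" "f x = y"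
    using IVT2'[of f \<rho> y a] \<rho>b ya continuous_on_subset[OF c, of "{a..\<rho>}"] by auto
  have "x \<in> R" using x \<rho>b unfolding R_def by auto
  then have "x = \<rho>" using lo x by force
  then have fy: "f \<rho> = y" using x by simp
  have "y \<le> f r" if "r \<in> {a..\<rho>}" for r
  proof (rule ccontr)
    assume "\<not> y \<le> f r"
    then have "r \<in> R" using that \<rho>b unfolding R_def by auto
    then have "r = \<rho>" using lo that by force
    then show False using fy \<open>\<not> y \<le> f r\<close> by simp
  qed
  then show ?thesis using fy r0\<rho> \<rho>b by auto
qed

locale snk0 = snk +
  assumes h0: "h 0 = 0" and z0: "0 \<le> \<zeta>"
begin

lemma anc:
  assumes s: "s \<in> S" and \<rho>: "0 \<le> \<rho>" "\<rho> \<le> h s"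
  shows "\<exists>\<sigma>\<in>S. \<sigma> \<le> s \<and> h \<sigma> = \<rho> \<and> mh h \<sigma> s = \<rho>"
proof -
  have c: "continuous_on {0..s} h" by (rule continuous_on_subset[OF hc]) (use s in auto)
  obtain \<sigma> where \<sigma>: "\<sigma> \<in> {0..s}" "h \<sigma> = \<rho>" "\<forall>r\<in>{\<sigma>..s}. \<rho> \<le> h r"
    using last_below[OF c, of 0 \<rho>] s \<rho> h0 by auto
  have "mh h \<sigma> s = Inf (h ` {\<sigma>..s})" unfolding mh_def using \<sigma> by simp
  also have "\<dots> = \<rho>"
    by (rule cInf_eq_minimum[of \<rho>]) (use \<sigma> in force)+
  finally show ?thesis using \<sigma> s by auto
qed

lemma mh_anc_other:
  assumes s: "s \<in> S" "s2 \<in> S" "\<sigma> \<in> S" and anc: "h \<sigma> = \<rho>" "mh h \<sigma> s = \<rho>"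
    and m: "mh h s s2 \<le> \<rho>"
  shows "mh h \<sigma> s2 = mh h s s2"
proof -
  have "min (mh h \<sigma> s) (mh h s s2) \<le> mh h \<sigma> s2" using mh_ultra[of \<sigma> s2 s] s by blast
  then have ge: "mh h s s2 \<le> mh h \<sigma> s2" using anc m by simp
  have "min (mh h s \<sigma>) (mh h \<sigma> s2) \<le> mh h s s2" using mh_ultra[of s s2 \<sigma>] s by blast
  moreover have "mh h \<sigma> s2 \<le> \<rho>" using mh_le1[of \<sigma> s2] s anc by simp
  ultimately show ?thesis using ge anc mh_sym[of s \<sigma>] by (auto simp: min_def split: if_splits)
qed

lemma anc_w: "s \<in> S \<Longrightarrow> \<sigma> \<in> S \<Longrightarrow> mh h \<sigma> s = \<rho> \<Longrightarrow> r \<in> {0..\<rho>} \<Longrightarrow> w \<sigma> r = w s r"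
  using cons by blast


lemma J_attain: "s \<in> S \<Longrightarrow> 0 \<le> a \<Longrightarrow> a \<le> h s \<Longrightarrow> \<exists>r\<in>{a..h s}. J s a = w s r"
  unfolding J_def using inf_attain[OF wc'] by blast

lemma J_ge: "a \<le> h s \<Longrightarrow> (\<And>x. x \<in> {a..h s} \<Longrightarrow> c \<le> w s x) \<Longrightarrow> c \<le> J s a"
  unfolding J_def by (rule inf_ge)

lemma half:
  assumes s1: "s1 \<in> S" and s2: "s2 \<in> S" and y: "P s1 s2 \<le> y" "y \<le> w s1 (h s1)"
  shows "\<exists>\<sigma>\<in>S. dhw h w s1 \<sigma> = w s1 (h s1) - y \<and> dhw h w \<sigma> s2 = w s2 (h s2) + y - 2 * P s1 s2"
proof -
  define m where "m = mh h s1 s2"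
  have m0: "0 \<le> m" and m1: "m \<le> h s1" and m2: "m \<le> h s2"
    unfolding m_def using mh_nn mh_le1 mh_le2 s1 s2 by auto
  have Pd: "P s1 s2 = min (J s1 m) (J s2 m)" unfolding P_def m_def ..
  show ?thesis
  proof (cases "J s1 m \<le> y")
    case True
    obtain r0 where r0: "r0 \<in> {m..h s1}" "J s1 m = w s1 r0" using J_attain[OF s1 m0 m1] by blast
    have "\<exists>\<rho>\<in>{r0..h s1}. w s1 \<rho> = y \<and> (\<forall>r\<in>{\<rho>..h s1}. y \<le> w s1 r)"
      using last_below[OF wc'[OF s1 m0, of "h s1"] r0(1), of y] r0(2) True y(2) by simp
    then obtain \<rho> where \<rho>: "\<rho> \<in> {r0..h s1}" "w s1 \<rho> = y" "\<forall>r\<in>{\<rho>..h s1}. y \<le> w s1 r"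
      by blast
    have \<rho>0: "0 \<le> \<rho>" "m \<le> \<rho>" "\<rho> \<le> h s1" using \<rho>(1) r0(1) m0 by auto
    have J\<rho>: "J s1 \<rho> = y"
    proof (rule antisym)
      show "J s1 \<rho> \<le> y" using J_le[OF s1 \<rho>0(1), of \<rho>] \<rho>0 \<rho>(2) by simp
      show "y \<le> J s1 \<rho>" by (rule J_ge) (use \<rho> \<rho>0 in auto)
    qed
    have Im: "Inf (w s1 ` {m..\<rho>}) \<le> y"
      using inf_le[OF wc'[OF s1 m0, of \<rho>], of \<rho>] \<rho>0 \<rho>(2) by simp
    have \<phi>1: "J s1 m = Inf (w s1 ` {m..\<rho>})"
      using J_split[OF s1 m0 \<rho>0(2,3)] J\<rho> Im by simp
    obtain \<sigma> where \<sigma>: "\<sigma> \<in> S" "h \<sigma> = \<rho>" "mh h \<sigma> s1 = \<rho>" using anc[OF s1 \<rho>0(1,3)] by blast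
    have w\<sigma>: "w \<sigma> r = w s1 r" if "r \<in> {0..\<rho>}" for r using anc_w[OF s1 \<sigma>(1) \<sigma>(3) that] .
    have tip: "w \<sigma> (h \<sigma>) = y" using w\<sigma>[of \<rho>] \<rho>0 \<sigma>(2) \<rho>(2) by simp
    have J\<sigma>\<rho>: "J \<sigma> \<rho> = y" unfolding J_def using \<sigma>(2) tip by (simp add: inf_single)
    have P1: "P s1 \<sigma> = y" unfolding P_def using mh_sym[of s1 \<sigma>] \<sigma>(3) J\<rho> J\<sigma>\<rho> by simp
    have m\<sigma>: "mh h \<sigma> s2 = m" unfolding m_def
      by (rule mh_anc_other[OF s1 s2 \<sigma>(1) \<sigma>(2,3)]) (use \<rho>0 m_def in simp)
    have "J \<sigma> m = Inf (w s1 ` {m..\<rho>})"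
      unfolding J_def \<sigma>(2) by (rule inf_cong) (use w\<sigma> m0 in auto)
    then have J\<sigma>m: "J \<sigma> m = J s1 m" using \<phi>1 by simp
    have P2: "P \<sigma> s2 = P s1 s2" unfolding P_def m\<sigma> using J\<sigma>m m_def by simp
    show ?thesis
      by (rule bexI[OF _ \<sigma>(1)]) (use P1 P2 tip in \<open>simp add: dhw_P\<close>)
  next
    case False
    then have a: "P s1 s2 = J s2 m" "J s2 m \<le> y" using Pd y(1) by auto
    obtain r0 where r0: "r0 \<in> {m..h s2}" "J s2 m = w s2 r0" using J_attain[OF s2 m0 m2] by blast
    have "w s2 m = w s1 m" using cons[OF s2 s1, of m] mh_sym[of s2 s1] m0 m_def by simp
    moreover have "J s1 m \<le> w s1 m" using J_le[OF s1 m0, of m] m1 by simp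
    ultimately have wm: "y \<le> w s2 m" using False by simp
    have "\<exists>\<rho>\<in>{m..r0}. w s2 \<rho> = y \<and> (\<forall>r\<in>{m..\<rho>}. y \<le> w s2 r)"
      using first_below[OF wc'[OF s2 m0, of "h s2"] r0(1), of y] r0(2) a(2) wm by simp
    then obtain \<rho> where \<rho>: "\<rho> \<in> {m..r0}" "w s2 \<rho> = y" "\<forall>r\<in>{m..\<rho>}. y \<le> w s2 r"
      by blast
    have \<rho>0: "0 \<le> \<rho>" "m \<le> \<rho>" "\<rho> \<le> h s2" using \<rho>(1) r0(1) m0 by auto
    have I\<rho>: "Inf (w s2 ` {m..\<rho>}) = y"
    proof (rule antisym)
      show "Inf (w s2 ` {m..\<rho>}) \<le> y" using inf_le[OF wc'[OF s2 m0, of \<rho>], of \<rho>] \<rho>0 \<rho>(2) by simp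
      show "y \<le> Inf (w s2 ` {m..\<rho>})" by (rule inf_ge) (use \<rho> \<rho>0 in auto)
    qed
    have \<phi>2: "J s2 m = min y (J s2 \<rho>)"
      using J_split[OF s2 m0 \<rho>0(2,3)] I\<rho> by simp
    obtain \<sigma> where \<sigma>: "\<sigma> \<in> S" "h \<sigma> = \<rho>" "mh h \<sigma> s2 = \<rho>" using anc[OF s2 \<rho>0(1,3)] by blast
    have w\<sigma>: "w \<sigma> r = w s2 r" if "r \<in> {0..\<rho>}" for r using anc_w[OF s2 \<sigma>(1) \<sigma>(3) that] .
    have tip: "w \<sigma> (h \<sigma>) = y" using w\<sigma>[of \<rho>] \<rho>0 \<sigma>(2) \<rho>(2) by simp
    have J\<sigma>\<rho>: "J \<sigma> \<rho> = y" unfolding J_def using \<sigma>(2) tip by (simp add: inf_single)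
    have m\<sigma>: "mh h \<sigma> s1 = m"
      using mh_anc_other[OF s2 s1 \<sigma>(1) \<sigma>(2,3)] \<rho>0 m_def mh_sym[of s2 s1] by simp
    have J\<sigma>m: "J \<sigma> m = y"
      unfolding J_def \<sigma>(2) I\<rho>[symmetric] by (rule inf_cong) (use w\<sigma> m0 in auto)
    have P1: "P s1 \<sigma> = y" unfolding P_def using mh_sym[of s1 \<sigma>] m\<sigma> J\<sigma>m False by simp
    have "P \<sigma> s2 = min (J \<sigma> \<rho>) (J s2 \<rho>)" unfolding P_def \<sigma>(3) ..
    then have P2: "P \<sigma> s2 = P s1 s2" using J\<sigma>\<rho> \<phi>2 a(1) by simp
    show ?thesis
      by (rule bexI[OF _ \<sigma>(1)]) (use P1 P2 tip in \<open>simp add: dhw_P\<close>)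
  qed
qed

lemma dhw_between:
  assumes s1: "s1 \<in> S" and s2: "s2 \<in> S" and d: "0 \<le> \<delta>" "\<delta> \<le> dhw h w s1 s2"
  shows "\<exists>\<sigma>\<in>S. dhw h w s1 \<sigma> = \<delta> \<and> dhw h w \<sigma> s2 = dhw h w s1 s2 - \<delta>"
proof -
  let ?a = "P s1 s2" and ?W1 = "w s1 (h s1)" and ?W2 = "w s2 (h s2)"
  have D: "dhw h w s1 s2 = ?W1 + ?W2 - 2 * ?a" by (rule dhw_P)
  have a1: "?a \<le> ?W1" using P_le_tip[OF s1 s2] .
  have a2: "?a \<le> ?W2" using P_le_tip[OF s2 s1] P_sym[of s1 s2] by simp
  show ?thesis
  proof (cases "\<delta> \<le> ?W1 - ?a")
    case True
    obtain \<sigma> where "\<sigma> \<in> S" "dhw h w s1 \<sigma> = ?W1 - (?W1 - \<delta>)" "dhw h w \<sigma> s2 = ?W2 + (?W1 - \<delta>) - 2 * ?a"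
      using half[OF s1 s2, of "?W1 - \<delta>"] True d by auto
    then show ?thesis using D by (intro bexI[of _ \<sigma>]) auto
  next
    case False
    have "P s2 s1 \<le> \<delta> - ?W1 + 2 * ?a" "\<delta> - ?W1 + 2 * ?a \<le> ?W2"
      using False d D P_sym[of s1 s2] by auto
    then obtain \<sigma> where \<sigma>: "\<sigma> \<in> S" "dhw h w s2 \<sigma> = ?W2 - (\<delta> - ?W1 + 2 * ?a)"
        "dhw h w \<sigma> s1 = ?W1 + (\<delta> - ?W1 + 2 * ?a) - 2 * P s2 s1"
      using half[OF s2 s1, of "\<delta> - ?W1 + 2 * ?a"] by blast
    then show ?thesis using D P_sym[of s1 s2] dhw_sym[of s2 \<sigma>] dhw_sym[of \<sigma> s1]
      by (intro bexI[of _ \<sigma>]) auto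
  qed
qed


lemma dhw_cont:
  assumes luc: "\<And>s0 R e. s0 \<in> S \<Longrightarrow> R > 0 \<Longrightarrow> e > 0 \<Longrightarrow>
      \<exists>\<delta>>0. \<forall>s\<in>S. \<bar>s - s0\<bar> < \<delta> \<longrightarrow> (\<forall>r\<in>{0..R}. \<bar>w s r - w s0 r\<bar> < e)"
    and s0: "s0 \<in> S" and e: "e > 0"
  shows "\<exists>\<delta>>0. \<forall>s\<in>S. \<bar>s - s0\<bar> < \<delta> \<longrightarrow> dhw h w s0 s < e"
proof -
  define c where "c = w s0 (h s0)"
  define \<epsilon> where "\<epsilon> = e / 7"
  have \<epsilon>: "\<epsilon> > 0" using e unfolding \<epsilon>_def by simp
  have h0: "0 \<le> h s0" using hnn s0 by simp
  obtain \<eta> where \<eta>: "\<eta> > 0" "\<forall>x\<in>{0..}. dist x (h s0) < \<eta> \<longrightarrow> dist (w s0 x) (w s0 (h s0)) < \<epsilon>"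
    using wc[OF s0] \<epsilon> h0 unfolding continuous_on_iff by (meson atLeast_iff)
  obtain \<delta>1 where \<delta>1: "\<delta>1 > 0" "\<forall>s\<in>S. dist s s0 < \<delta>1 \<longrightarrow> dist (h s) (h s0) < \<eta>"
    using hc s0 \<eta>(1) unfolding continuous_on_iff by blast
  obtain \<delta>2 where \<delta>2: "\<delta>2 > 0" "\<forall>s\<in>S. \<bar>s - s0\<bar> < \<delta>2 \<longrightarrow> (\<forall>r\<in>{0..h s0 + \<eta>}. \<bar>w s r - w s0 r\<bar> < \<epsilon>)"
    using luc[OF s0, of "h s0 + \<eta>" \<epsilon>] h0 \<eta>(1) \<epsilon> by auto
  show ?thesis
  proof (intro exI[of _ "min \<delta>1 \<delta>2"] conjI ballI impI)
    show "min \<delta>1 \<delta>2 > 0" using \<delta>1 \<delta>2 by simp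
    fix s assume s: "s \<in> S" and ds: "\<bar>s - s0\<bar> < min \<delta>1 \<delta>2"
    define m where "m = mh h s0 s"
    obtain r where r: "r \<in> {min s0 s..max s0 s}" "m = h r" using mh_attain[OF s0 s] m_def by blast
    have rS: "r \<in> S" using r(1) s s0 by auto
    have "dist r s0 < \<delta>1" using r(1) ds by (auto simp: dist_real_def)
    then have mlow: "h s0 - \<eta> < m" using \<delta>1(2) rS r(2) by (auto simp: dist_real_def)
    have hs: "\<bar>h s - h s0\<bar> < \<eta>" using \<delta>1(2) s ds by (auto simp: dist_real_def)
    have m0: "0 \<le> m" "m \<le> h s0" "m \<le> h s" unfolding m_def using mh_nn mh_le1 mh_le2 s s0 by auto
    have W0: "\<bar>w s0 x - c\<bar> < \<epsilon>" if "x \<in> {m..h s0}" for x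
      using \<eta>(2) that m0 mlow unfolding c_def by (auto simp: dist_real_def)
    have W: "\<bar>w s x - c\<bar> < 2 * \<epsilon>" if "x \<in> {m..h s}" for x
    proof -
      have x: "0 \<le> x" "x \<le> h s0 + \<eta>" "\<bar>x - h s0\<bar> < \<eta>" using that m0 mlow hs by auto
      have "\<bar>w s x - w s0 x\<bar> < \<epsilon>" using \<delta>2(2) s ds x by auto
      moreover have "\<bar>w s0 x - c\<bar> < \<epsilon>" using \<eta>(2) x unfolding c_def by (auto simp: dist_real_def)
      ultimately show ?thesis by linarith
    qed
    have J0: "\<bar>J s0 m - c\<bar> \<le> \<epsilon>" unfolding J_def
      by (rule inf_bound[OF wc'[OF s0 m0(1)] m0(2)]) (use W0 in force)
    have J1: "\<bar>J s m - c\<bar> \<le> 2 * \<epsilon>" unfolding J_def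
      by (rule inf_bound[OF wc'[OF s m0(1)] m0(3)]) (use W in force)
    have T: "\<bar>w s (h s) - c\<bar> < 2 * \<epsilon>" using W[of "h s"] m0 by simp
    have "dhw h w s0 s = c + w s (h s) - 2 * min (J s0 m) (J s m)"
      unfolding dhw_P P_def m_def c_def ..
    also have "\<dots> \<le> 6 * \<epsilon>" using J0 J1 T by (auto simp: min_def)
    also have "\<dots> < e" using \<epsilon> unfolding \<epsilon>_def by simp
    finally show "dhw h w s0 s < e" .
  qed
qed

end


lemma snake_snk0:
  assumes sn: "is_snake \<zeta> h w" and z: "\<zeta> > 0"
  shows "snk0 \<zeta> h w"
  using sn z unfolding is_snake_def snk0_def snk_def snk0_axioms_def by auto

lemma snake_luc:
  assumes sn: "is_snake \<zeta> h w"
  shows "\<And>s0 R e. s0 \<in> {0..\<zeta>} \<Longrightarrow> R > 0 \<Longrightarrow> e > 0 \<Longrightarrow>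
      \<exists>\<delta>>0. \<forall>s\<in>{0..\<zeta>}. \<bar>s - s0\<bar> < \<delta> \<longrightarrow> (\<forall>r\<in>{0..R}. \<bar>w s r - w s0 r\<bar> < e)"
  using sn unfolding is_snake_def by blast

lemma snake_snk0_H:
  assumes sn: "is_snake \<zeta> h w" and z: "\<zeta> > 0"
  shows "snk0 \<zeta> h (\<lambda>s r. min r (h s))"
proof -
  interpret W: snk0 \<zeta> h w by (rule snake_snk0[OF sn z])
  show ?thesis
  proof (unfold_locales)
    show "continuous_on {0..\<zeta>} h" by (rule W.hc)
    show "0 \<le> h s" if "s \<in> {0..\<zeta>}" for s using W.hnn that .
    show "continuous_on {0..} (\<lambda>r. min r (h s))" for s by (intro continuous_intros)
    show "min r (h s1) = min r (h s2)" if "s1 \<in> {0..\<zeta>}" "s2 \<in> {0..\<zeta>}" "r \<in> {0..mh h s1 s2}" for s1 s2 r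
      using that W.mh_le1[of s1 s2] W.mh_le2[of s1 s2] by auto
    show "h 0 = 0" by (rule W.h0)
    show "0 \<le> \<zeta>" by (rule W.z0)
  qed
qed

lemma snake_luc_H:
  assumes sn: "is_snake \<zeta> h w"
  shows "\<And>s0 R e. s0 \<in> {0..\<zeta>} \<Longrightarrow> R > 0 \<Longrightarrow> e > 0 \<Longrightarrow>
      \<exists>\<delta>>0. \<forall>s\<in>{0..\<zeta>}. \<bar>s - s0\<bar> < \<delta> \<longrightarrow> (\<forall>r\<in>{0..R}. \<bar>min r (h s) - min r (h s0)\<bar> < e)"
proof -
  fix s0 R e :: real assume s0: "s0 \<in> {0..\<zeta>}" and e: "e > 0"
  have hc: "continuous_on {0..\<zeta>} h" using sn unfolding is_snake_def by blast
  obtain \<delta> where \<delta>: "\<delta> > 0" "\<forall>s\<in>{0..\<zeta>}. dist s s0 < \<delta> \<longrightarrow> dist (h s) (h s0) < e"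
    using hc s0 e unfolding continuous_on_iff by blast
  have "\<bar>min r (h s) - min r (h s0)\<bar> < e" if "s \<in> {0..\<zeta>}" "\<bar>s - s0\<bar> < \<delta>" for s r
  proof -
    have "\<bar>h s - h s0\<bar> < e" using \<delta>(2) that by (auto simp: dist_real_def)
    then show ?thesis by (auto simp: min_def)
  qed
  then show "\<exists>\<delta>>0. \<forall>s\<in>{0..\<zeta>}. \<bar>s - s0\<bar> < \<delta> \<longrightarrow> (\<forall>r\<in>{0..R}. \<bar>min r (h s) - min r (h s0)\<bar> < e)"
    using \<delta>(1) by blast
qed

lemma (in snk) dh_eq:
  assumes s: "s1 \<in> S" "s2 \<in> S"
  shows "dh h s1 s2 = dhw h (\<lambda>s r. min r (h s)) s1 s2"
proof -
  let ?m = "mh h s1 s2"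
  have m: "?m \<le> h s1" "?m \<le> h s2" using mh_le1 mh_le2 s by auto
  have I: "Inf ((\<lambda>r. min r (h s)) ` {?m..h s}) = ?m" if "?m \<le> h s" for s
  proof (rule cInf_eq_minimum)
    show "?m \<in> (\<lambda>r. min r (h s)) ` {?m..h s}" using that by (intro image_eqI[of _ _ ?m]) auto
    show "?m \<le> x" if "x \<in> (\<lambda>r. min r (h s)) ` {?m..h s}" for x using that \<open>?m \<le> h s\<close> by auto
  qed
  show ?thesis unfolding dh_def dhw_def using I[OF m(1)] I[OF m(2)] by simp
qed

lemma pseudo_on_cong:
  "pseudo_on S d1 \<Longrightarrow> (\<And>s t. s \<in> S \<Longrightarrow> t \<in> S \<Longrightarrow> d1 s t = d2 s t) \<Longrightarrow> pseudo_on S d2"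
  unfolding pseudo_on_def by simp

lemma closedin_in_borel_of: "closedin X C \<Longrightarrow> C \<in> sets (borel_of X)"
proof -
  assume c: "closedin X C"
  then have "openin X (topspace X - C)" by (simp add: openin_diff)
  then have "topspace X - C \<in> sets (borel_of X)" by (rule open_in_borel_of)
  then have "space (borel_of X) - (topspace X - C) \<in> sets (borel_of X)" by (rule sets.compl_sets)
  moreover have "space (borel_of X) - (topspace X - C) = C"
    using c closedin_subset space_borel_of by (metis Diff_Diff_Int inf.absorb_iff2)
  ultimately show ?thesis by simp
qed

lemma singleton_in_borel_of:
  assumes ms: "Metric_space M d" and x: "x \<in> M"
  shows "{x} \<in> sets (borel_of (Metric_space.mtopology M d))"
proof -
  interpret Metric_space M d by (rule ms)
  have "mcball x 0 = {x}"
  proof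
    show "{x} \<subseteq> mcball x 0" using x by auto
    show "mcball x 0 \<subseteq> {x}"
    proof
      fix y assume "y \<in> mcball x 0"
      then have "y \<in> M" "d x y \<le> 0" by auto
      then have "d x y = 0" using nonneg[of x y] by linarith
      then show "y \<in> {x}" using x \<open>y \<in> M\<close> by simp
    qed
  qed
  then show ?thesis using closedin_in_borel_of[OF closedin_mcball[of x 0]] by simp
qed

lemma isometry_cont:
  assumes ms: "Metric_space M d" and g: "g ` {0..D} \<subseteq> M" and iso: "\<And>s t. s \<in> {0..D} \<Longrightarrow> t \<in> {0..D} \<Longrightarrow> d (g s) (g t) = \<bar>s - t\<bar>"
  shows "continuous_map (top_of_set {0..D}) (Metric_space.mtopology M d) g"
proof -
  interpret Metric_space M d by (rule ms)
  show ?thesis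
    unfolding continuous_map_to_metric
  proof (intro ballI allI impI)
    fix x e assume x: "x \<in> topspace (top_of_set {0..D})" and e: "(e::real) > 0"
    show "\<exists>U. openin (top_of_set {0..D}) U \<and> x \<in> U \<and> (\<forall>y\<in>U. g y \<in> mball (g x) e)"
    proof (intro exI conjI ballI)
      show "openin (top_of_set {0..D}) ({0..D} \<inter> ball x e)" by (rule openin_open_Int) simp
      show "x \<in> {0..D} \<inter> ball x e" using x e by simp
      fix y assume y: "y \<in> {0..D} \<inter> ball x e"
      then show "g y \<in> mball (g x) e" using g x iso[of x y] by (auto simp: dist_real_def)
    qed
  qed
qed


lemma (in snk) U_lem:
  assumes s: "s \<in> Uhw \<zeta> h w" and m: "0 \<le> m" "m \<le> h s" and J: "w s (h s) \<le> J s m"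
  shows "m = h s"
proof (rule ccontr)
  assume "m \<noteq> h s"
  then have ml: "m < h s" using m by simp
  have sS: "s \<in> S" and hs: "h s > 0" and U: "\<forall>e\<in>{0<..<h s}. Inf (w s ` {h s - e..h s}) < w s (h s)"
    using s unfolding Uhw_def by auto
  define e where "e = (h s - m) / 2"
  have e: "e \<in> {0<..<h s}" using ml m hs unfolding e_def by auto
  have me: "m \<le> h s - e" using ml unfolding e_def by (simp add: field_simps)
  have "J s m \<le> Inf (w s ` {h s - e..h s})"
  proof (rule inf_ge)
    show "h s - e \<le> h s" using e by simp
    fix x assume "x \<in> {h s - e..h s}"
    then show "J s m \<le> w s x" using J_le[OF sS m(1), of x] me by simp
  qed
  then show False using U e J by force
qed

context
  fixes \<zeta> :: real and h :: "real \<Rightarrow> real" and w :: "real \<Rightarrow> real \<Rightarrow> real"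
  assumes z: "\<zeta> > 0"
    and sn: "is_snake \<zeta> h w"
    and nullU: "{0..\<zeta>} - Uhw \<zeta> h w \<in> null_sets lebesgue"
    and hyp: "continuum_real_tree (qspace \<zeta> (dh h)) (qdist \<zeta> (dh h)) (qroot \<zeta> (dh h)) (qmeasure \<zeta> (dh h))"
begin

abbreviation "S' \<equiv> {0..\<zeta>}"
abbreviation "w' \<equiv> (\<lambda>s r. min r (h s))"

lemma sW: "snk0 \<zeta> h w" by (rule snake_snk0[OF sn z])
lemma sH: "snk0 \<zeta> h w'" by (rule snake_snk0_H[OF sn z])

lemma dhE: "s \<in> S' \<Longrightarrow> t \<in> S' \<Longrightarrow> dh h s t = dhw h w' s t"
  using snk.dh_eq[OF snk0.axioms(1)[OF sW]] by blast

lemma psW: "pseudo_on S' (dhw h w)" using snk.dhw_pseudo[OF snk0.axioms(1)[OF sW]] .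
lemma psH: "pseudo_on S' (dh h)"
  by (rule pseudo_on_cong[OF snk.dhw_pseudo[OF snk0.axioms(1)[OF sH]]]) (simp add: dhE)

lemma msW: "Metric_space (qspace \<zeta> (dhw h w)) (qdist \<zeta> (dhw h w))" using q_metric[OF psW] .
lemma msH: "Metric_space (qspace \<zeta> (dh h)) (qdist \<zeta> (dh h))" using q_metric[OF psH] .

lemma fpW: "fourpt (qspace \<zeta> (dhw h w)) (qdist \<zeta> (dhw h w))"
  by (rule q_fourpt[OF psW]) (rule snk.dhw_fourpt[OF snk0.axioms(1)[OF sW]]; simp)
lemma fpH: "fourpt (qspace \<zeta> (dh h)) (qdist \<zeta> (dh h))"
  by (rule q_fourpt[OF psH]) (use snk.dhw_fourpt[OF snk0.axioms(1)[OF sH]] dhE in simp)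

lemma cmW: "continuous_map (top_of_set S') (Metric_space.mtopology (qspace \<zeta> (dhw h w)) (qdist \<zeta> (dhw h w))) (qclass \<zeta> (dhw h w))"
  by (rule q_cont_map[OF psW]) (rule snk0.dhw_cont[OF sW snake_luc[OF sn]]; simp)
lemma cmH: "continuous_map (top_of_set S') (Metric_space.mtopology (qspace \<zeta> (dh h)) (qdist \<zeta> (dh h))) (qclass \<zeta> (dh h))"
proof (rule q_cont_map[OF psH])
  fix s0 e :: real assume "s0 \<in> S'" "e > 0"
  then obtain \<delta> where "\<delta> > 0" "\<forall>s\<in>S'. \<bar>s - s0\<bar> < \<delta> \<longrightarrow> dhw h w' s0 s < e"
    using snk0.dhw_cont[OF sH snake_luc_H[OF sn]] by blast
  then show "\<exists>\<delta>>0. \<forall>s\<in>S'. \<bar>s - s0\<bar> < \<delta> \<longrightarrow> dh h s0 s < e" using dhE \<open>s0 \<in> S'\<close> by auto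
qed

lemma measW: "qclass \<zeta> (dhw h w) \<in> measurable (restrict_space lebesgue S') (borel_of (Metric_space.mtopology (qspace \<zeta> (dhw h w)) (qdist \<zeta> (dhw h w))))"
  by (rule q_measurable[OF psW cmW])
lemma measH: "qclass \<zeta> (dh h) \<in> measurable (restrict_space lebesgue S') (borel_of (Metric_space.mtopology (qspace \<zeta> (dh h)) (qdist \<zeta> (dh h))))"
  by (rule q_measurable[OF psH cmH])

lemma preimage_lebesgue:
  assumes "f \<in> measurable (restrict_space lebesgue S') N" "A \<in> sets N"
  shows "f -` A \<inter> S' \<in> sets lebesgue"
proof -
  have "f -` A \<inter> space (restrict_space lebesgue S') \<in> sets (restrict_space lebesgue S')"
    using assms by (rule measurable_sets)
  then show ?thesis by (simp add: space_restrict_space sets_restrict_space_iff)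
qed

lemma hypH_atoms: "x \<in> qspace \<zeta> (dh h) \<Longrightarrow> emeasure (qmeasure \<zeta> (dh h)) {x} = 0"
  using hyp unfolding continuum_real_tree_def by blast

lemma hypH_sets: "sets (qmeasure \<zeta> (dh h)) = sets (borel_of (Metric_space.mtopology (qspace \<zeta> (dh h)) (qdist \<zeta> (dh h))))"
  unfolding qmeasure_def by simp

lemma hypH_space: "space (qmeasure \<zeta> (dh h)) = qspace \<zeta> (dh h)"
  by (simp add: qmeasure_def space_borel_of Metric_space.topspace_mtopology[OF msH])

lemma hypH_N:
  obtains N where "N \<in> sets (borel_of (Metric_space.mtopology (qspace \<zeta> (dh h)) (qdist \<zeta> (dh h))))"
    "emeasure (qmeasure \<zeta> (dh h)) N = 0"
    "\<And>x. x \<in> qspace \<zeta> (dh h) \<Longrightarrow> \<not> is_leaf (qspace \<zeta> (dh h)) (qdist \<zeta> (dh h)) (qroot \<zeta> (dh h)) x \<Longrightarrow> x \<in> N"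
proof -
  have "AE x in qmeasure \<zeta> (dh h). is_leaf (qspace \<zeta> (dh h)) (qdist \<zeta> (dh h)) (qroot \<zeta> (dh h)) x"
    using hyp unfolding continuum_real_tree_def by blast
  then obtain N where "{x \<in> space (qmeasure \<zeta> (dh h)). \<not> is_leaf (qspace \<zeta> (dh h)) (qdist \<zeta> (dh h)) (qroot \<zeta> (dh h)) x} \<subseteq> N"
    "emeasure (qmeasure \<zeta> (dh h)) N = 0" "N \<in> sets (qmeasure \<zeta> (dh h))"
    by (rule AE_E)
  note N = this
  show ?thesis
  proof (rule that)
    show "N \<in> sets (borel_of (Metric_space.mtopology (qspace \<zeta> (dh h)) (qdist \<zeta> (dh h))))"
      using N(3) hypH_sets by simp
    show "emeasure (qmeasure \<zeta> (dh h)) N = 0" by (rule N(2))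
    fix x assume "x \<in> qspace \<zeta> (dh h)" "\<not> is_leaf (qspace \<zeta> (dh h)) (qdist \<zeta> (dh h)) (qroot \<zeta> (dh h)) x"
    then show "x \<in> N" using N(1) hypH_space by blast
  qed
qed

lemma leafH_notbetween:
  assumes x: "x \<in> qspace \<zeta> (dh h)" and a: "a \<in> qspace \<zeta> (dh h)" and b: "b \<in> qspace \<zeta> (dh h)"
    and xa: "x \<noteq> a" and xb: "x \<noteq> b"
    and btw: "qdist \<zeta> (dh h) a x + qdist \<zeta> (dh h) x b = qdist \<zeta> (dh h) a b"
  shows "\<not> is_leaf (qspace \<zeta> (dh h)) (qdist \<zeta> (dh h)) (qroot \<zeta> (dh h)) x"
proof
  assume "is_leaf (qspace \<zeta> (dh h)) (qdist \<zeta> (dh h)) (qroot \<zeta> (dh h)) x"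
  then have c: "connectedin (Metric_space.mtopology (qspace \<zeta> (dh h)) (qdist \<zeta> (dh h))) (qspace \<zeta> (dh h) - {x})"
    unfolding is_leaf_def by blast
  have "x \<in> qspace \<zeta> (dh h) - {x}"
    by (rule separation[OF msH fpH x a b xa xb btw c]) (use a b xa xb in auto)
  then show False by simp
qed

lemma Anc_null:
  assumes s: "s \<in> S'"
  shows "{t \<in> S'. h t = mh h s t} \<in> null_sets lebesgue"
proof -
  interpret H: snk0 \<zeta> h w' by (rule sH)
  let ?p = "qclass \<zeta> (dh h)"
  let ?B = "borel_of (Metric_space.mtopology (qspace \<zeta> (dh h)) (qdist \<zeta> (dh h)))"
  obtain N where N: "N \<in> sets ?B" "emeasure (qmeasure \<zeta> (dh h)) N = 0"
    "\<And>x. x \<in> qspace \<zeta> (dh h) \<Longrightarrow> \<not> is_leaf (qspace \<zeta> (dh h)) (qdist \<zeta> (dh h)) (qroot \<zeta> (dh h)) x \<Longrightarrow> x \<in> N"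
    by (rule hypH_N) blast
  have z0: "0 \<in> S'" using z by simp
  have ps: "?p s \<in> qspace \<zeta> (dh h)" "?p 0 \<in> qspace \<zeta> (dh h)" using qclass_in[OF psH] s z0 by auto
  define X where "X = N \<union> {?p s} \<union> {?p 0}"
  have Xs: "X \<in> sets ?B" unfolding X_def
    by (intro sets.Un N(1) singleton_in_borel_of[OF msH ps(1)] singleton_in_borel_of[OF msH ps(2)])
  have Nq: "N \<in> sets (qmeasure \<zeta> (dh h))" using N(1) hypH_sets by simp
  have S1: "{?p s} \<in> sets (qmeasure \<zeta> (dh h))" using singleton_in_borel_of[OF msH ps(1)] hypH_sets by simp
  have S2: "{?p 0} \<in> sets (qmeasure \<zeta> (dh h))" using singleton_in_borel_of[OF msH ps(2)] hypH_sets by simp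
  have "emeasure (qmeasure \<zeta> (dh h)) X \<le> emeasure (qmeasure \<zeta> (dh h)) (N \<union> {?p s}) + emeasure (qmeasure \<zeta> (dh h)) {?p 0}"
    unfolding X_def by (rule emeasure_subadditive[OF sets.Un[OF Nq S1] S2])
  also have "emeasure (qmeasure \<zeta> (dh h)) (N \<union> {?p s}) \<le> emeasure (qmeasure \<zeta> (dh h)) N + emeasure (qmeasure \<zeta> (dh h)) {?p s}"
    by (rule emeasure_subadditive[OF Nq S1])
  finally have "emeasure (qmeasure \<zeta> (dh h)) X \<le> 0"
    unfolding N(2) hypH_atoms[OF ps(1)] hypH_atoms[OF ps(2)] by simp
  then have "emeasure (qmeasure \<zeta> (dh h)) X = 0" by simp
  then have L0: "emeasure lebesgue (?p -` X \<inter> S') = 0" using q_emeasure[OF psH measH Xs] by simp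
  have Lm: "?p -` X \<inter> S' \<in> sets lebesgue" by (rule preimage_lebesgue[OF measH Xs])
  have sub: "{t \<in> S'. h t = mh h s t} \<subseteq> ?p -` X \<inter> S'"
  proof
    fix t assume "t \<in> {t \<in> S'. h t = mh h s t}"
    then have t: "t \<in> S'" "h t = mh h s t" by auto
    have pt: "?p t \<in> qspace \<zeta> (dh h)" using qclass_in[OF psH] t by auto
    show "t \<in> ?p -` X \<inter> S'"
    proof (cases "?p t = ?p s \<or> ?p t = ?p 0")
      case True then show ?thesis using t unfolding X_def by auto
    next
      case False
      have m0: "mh h 0 t = 0" using H.mh_nn[OF z0 t(1)] H.mh_le1[OF z0 t(1)] H.h0 by simp
      have d0t: "dh h 0 t = h t" unfolding dh_def using m0 H.h0 by simp
      have d0s: "dh h 0 s = h s"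
        using H.mh_nn[OF z0 s] H.mh_le1[OF z0 s] H.h0 unfolding dh_def by simp
      have dts: "dh h t s = h s - h t" unfolding dh_def using t(2) H.mh_sym[of s t] by simp
      have btw: "qdist \<zeta> (dh h) (?p 0) (?p t) + qdist \<zeta> (dh h) (?p t) (?p s) = qdist \<zeta> (dh h) (?p 0) (?p s)"
        unfolding qdist_qclass[OF psH z0 t(1)] qdist_qclass[OF psH t(1) s] qdist_qclass[OF psH z0 s] d0t d0s dts
        by simp
      have "\<not> is_leaf (qspace \<zeta> (dh h)) (qdist \<zeta> (dh h)) (qroot \<zeta> (dh h)) (?p t)"
        by (rule leafH_notbetween[OF pt ps(2) ps(1) _ _ btw]) (use False in auto)
      then have "?p t \<in> N" using N(3) pt by blast
      then show ?thesis using t unfolding X_def by auto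
    qed
  qed
  have "?p -` X \<inter> S' \<in> null_sets lebesgue" by (rule null_setsI[OF L0 Lm])
  then show ?thesis using null_sets_completion_subset[OF sub] by blast
qed


lemma rtW: "real_tree (qspace \<zeta> (dhw h w)) (qdist \<zeta> (dhw h w))"
proof (rule real_treeI[OF msW fpW])
  fix a b \<delta> assume "a \<in> qspace \<zeta> (dhw h w)" "b \<in> qspace \<zeta> (dhw h w)" "0 \<le> \<delta>" "\<delta> \<le> qdist \<zeta> (dhw h w) a b"
  then show "\<exists>z\<in>qspace \<zeta> (dhw h w). qdist \<zeta> (dhw h w) a z = \<delta> \<and> qdist \<zeta> (dhw h w) z b = qdist \<zeta> (dhw h w) a b - \<delta>"
    using q_between[OF psW snk0.dhw_between[OF sW]] by blast
qed

lemma classW_sub: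
  assumes s: "s \<in> S'"
  shows "{t \<in> S'. dhw h w s t = 0} \<subseteq> (S' - Uhw \<zeta> h w) \<union> {t \<in> S'. h t = mh h s t}"
proof
  interpret W: snk0 \<zeta> h w by (rule sW)
  fix t assume "t \<in> {t \<in> S'. dhw h w s t = 0}"
  then have t: "t \<in> S'" "dhw h w s t = 0" by auto
  show "t \<in> (S' - Uhw \<zeta> h w) \<union> {t \<in> S'. h t = mh h s t}"
  proof (cases "t \<in> Uhw \<zeta> h w")
    case False then show ?thesis using t by auto
  next
    case True
    have "W.P s t \<le> w s (h s)" by (rule W.P_le_tip[OF s t(1)])
    moreover have "W.P s t \<le> w t (h t)" using W.P_le_tip[OF t(1) s] W.P_sym[of s t] by simp
    ultimately have Pt: "W.P s t = w t (h t)" using t(2) unfolding W.dhw_P by linarith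
    have "w t (h t) \<le> W.J t (mh h s t)" using W.P_le_J2[of s t] Pt by simp
    then have "mh h s t = h t"
      by (rule W.U_lem[OF True W.mh_nn[OF s t(1)] W.mh_le2[OF s t(1)]])
    then show ?thesis using t by auto
  qed
qed

lemma atomsW:
  assumes x: "x \<in> qspace \<zeta> (dhw h w)"
  shows "emeasure (qmeasure \<zeta> (dhw h w)) {x} = 0"
proof -
  obtain s where s: "s \<in> S'" "x = qclass \<zeta> (dhw h w) s" using x by (meson qspaceE[OF psW])
  have "emeasure (qmeasure \<zeta> (dhw h w)) {x} = emeasure lebesgue (qclass \<zeta> (dhw h w) -` {x} \<inter> S')"
    by (rule q_emeasure[OF psW measW singleton_in_borel_of[OF msW x]])
  also have "qclass \<zeta> (dhw h w) -` {x} \<inter> S' = {t \<in> S'. dhw h w s t = 0}"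
    using qclass_eq_iff[OF psW] s ps_sym[OF psW] by auto
  also have "emeasure lebesgue {t \<in> S'. dhw h w s t = 0} \<le> emeasure lebesgue ((S' - Uhw \<zeta> h w) \<union> {t \<in> S'. h t = mh h s t})"
    by (rule emeasure_mono[OF classW_sub[OF s(1)]]) (use nullU Anc_null[OF s(1)] in auto)
  also have "\<dots> = 0"
  proof -
    have "(S' - Uhw \<zeta> h w) \<union> {t \<in> S'. h t = mh h s t} \<in> null_sets lebesgue"
      by (rule null_sets.Un[OF nullU Anc_null[OF s(1)]])
    then show ?thesis by auto
  qed
  finally show ?thesis by simp
qed

lemma mh0: "s \<in> S' \<Longrightarrow> mh h s 0 = 0"
proof -
  interpret W: snk0 \<zeta> h w by (rule sW)
  assume s: "s \<in> S'"
  have z0: "0 \<in> S'" using z by simp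
  show ?thesis using W.mh_nn[OF s z0] W.mh_le2[OF s z0] W.h0 by simp
qed

lemma P0: "s \<in> S' \<Longrightarrow> snk.P h w s 0 = snk.J h w s 0"
proof -
  interpret W: snk0 \<zeta> h w by (rule sW)
  assume s: "s \<in> S'"
  have z0: "0 \<in> S'" using z by simp
  have J00: "W.J 0 0 = w 0 0" unfolding W.J_def using W.h0 by (simp add: inf_single)
  have "w s 0 = w 0 0" using W.cons[OF s z0, of 0] W.mh_nn[OF s z0] by simp
  moreover have "W.J s 0 \<le> w s 0" using W.J_le[OF s, of 0 0] W.hnn[OF s] by simp
  ultimately show ?thesis unfolding W.P_def mh0[OF s] J00 by simp
qed

lemma Js0_lt: "s \<in> Uhw \<zeta> h w \<Longrightarrow> snk.J h w s 0 < w s (h s)"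
proof -
  interpret W: snk0 \<zeta> h w by (rule sW)
  assume s: "s \<in> Uhw \<zeta> h w"
  have sS: "s \<in> S'" and hs: "h s > 0" using s unfolding Uhw_def by auto
  show ?thesis
  proof (rule ccontr)
    assume "\<not> W.J s 0 < w s (h s)"
    then have "0 = h s" using W.U_lem[OF s, of 0] hs by simp
    then show False using hs by simp
  qed
qed

lemma rootW_ne:
  assumes s: "s \<in> Uhw \<zeta> h w"
  shows "qclass \<zeta> (dhw h w) s \<noteq> qclass \<zeta> (dhw h w) 0"
proof -
  interpret W: snk0 \<zeta> h w by (rule sW)
  have sS: "s \<in> S'" using s unfolding Uhw_def by auto
  have z0: "0 \<in> S'" using z by simp
  have "w s 0 = w 0 0" using W.cons[OF sS z0, of 0] W.mh_nn[OF sS z0] by simp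
  moreover have "W.J s 0 \<le> w s 0" using W.J_le[OF sS, of 0 0] W.hnn[OF sS] by simp
  moreover have "dhw h w s 0 = w s (h s) + w 0 0 - 2 * W.J s 0"
    unfolding W.dhw_P P0[OF sS] using W.h0 by simp
  ultimately have "dhw h w s 0 > 0" using Js0_lt[OF s] by simp
  then show ?thesis using qclass_eq_iff[OF psW sS z0] by simp
qed


lemma notbetween:
  assumes s: "s \<in> Uhw \<zeta> h w"
    and leafH: "is_leaf (qspace \<zeta> (dh h)) (qdist \<zeta> (dh h)) (qroot \<zeta> (dh h)) (qclass \<zeta> (dh h) s)"
    and t: "t \<in> S'" and ne: "qclass \<zeta> (dhw h w) t \<noteq> qclass \<zeta> (dhw h w) s"
  shows "dhw h w t s + dhw h w s 0 \<noteq> dhw h w t 0"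
proof
  interpret W: snk0 \<zeta> h w by (rule sW)
  interpret H: snk0 \<zeta> h w' by (rule sH)
  assume E: "dhw h w t s + dhw h w s 0 = dhw h w t 0"
  have sS: "s \<in> S'" using s unfolding Uhw_def by auto
  have z0: "0 \<in> S'" using z by simp
  let ?a = "W.P t s" and ?Is = "W.J s 0" and ?It = "W.J t 0"
  have E': "w s (h s) + ?It = ?a + ?Is"
    using E unfolding W.dhw_P P0[OF sS] P0[OF t] by simp
  have u1: "min ?It ?Is \<le> ?a" using W.P_ultra[OF t sS z0] P0[OF t] P0[OF sS] W.P_sym[of 0 s] by simp
  have u2: "min ?a ?Is \<le> ?It" using W.P_ultra[OF t z0 sS] P0[OF t] P0[OF sS] by simp
  have le: "?a \<le> w s (h s)" using W.P_le_tip[OF sS t] W.P_sym[of t s] by simp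
  have lt: "?Is < w s (h s)" by (rule Js0_lt[OF s])
  have aeq: "?a = w s (h s)"
  proof (rule ccontr)
    assume "?a \<noteq> w s (h s)"
    then have "?a < w s (h s)" using le by simp
    then have "?It < ?Is" using E' by simp
    then have "?a \<le> ?It" using u2 by (simp add: min_def split: if_splits)
    moreover have "?It \<le> ?a" using u1 \<open>?It < ?Is\<close> by (simp add: min_def split: if_splits)
    ultimately show False using E' lt by simp
  qed
  have mts: "mh h t s = h s"
    by (rule W.U_lem[OF s W.mh_nn[OF t sS] W.mh_le2[OF t sS]]) (use W.P_le_J2[of t s] aeq in simp)
  have ht0: "dh h t 0 = h t" unfolding dh_def using mh0[OF t] W.h0 by simp
  have hs0: "dh h s 0 = h s" unfolding dh_def using mh0[OF sS] W.h0 by simp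
  have hts: "dh h t s = h t - h s" unfolding dh_def using mts by simp
  let ?p = "qclass \<zeta> (dh h)"
  have pin: "?p s \<in> qspace \<zeta> (dh h)" "?p t \<in> qspace \<zeta> (dh h)" "?p 0 \<in> qspace \<zeta> (dh h)"
    using qclass_in[OF psH] sS t z0 by auto
  have s0: "?p s \<noteq> ?p 0" using leafH unfolding is_leaf_def qroot_def by simp
  have "?p s = ?p t"
  proof (rule ccontr)
    assume "?p s \<noteq> ?p t"
    have btw: "qdist \<zeta> (dh h) (?p t) (?p s) + qdist \<zeta> (dh h) (?p s) (?p 0) = qdist \<zeta> (dh h) (?p t) (?p 0)"
      unfolding qdist_qclass[OF psH t sS] qdist_qclass[OF psH sS z0] qdist_qclass[OF psH t z0] ht0 hs0 hts
      by simp
    have "\<not> is_leaf (qspace \<zeta> (dh h)) (qdist \<zeta> (dh h)) (qroot \<zeta> (dh h)) (?p s)"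
      by (rule leafH_notbetween[OF pin(1) pin(2) pin(3) _ s0 btw]) (use \<open>?p s \<noteq> ?p t\<close> in simp)
    then show False using leafH by simp
  qed
  then have "dh h s t = 0" using qclass_eq_iff[OF psH sS t] by simp
  then have htt: "h t = h s" unfolding dh_def using mts W.mh_sym[of s t] by simp
  have "w t (h s) = w s (h s)" using W.cons[OF t sS, of "h s"] mts W.hnn[OF sS] by simp
  then have tip: "w t (h t) = w s (h s)" using htt by simp
  have "W.P t s = w s (h s)" unfolding W.P_def W.J_def mts using htt tip by (simp add: inf_single)
  then have "dhw h w t s = 0" unfolding W.dhw_P using tip by simp
  then show False using ne qclass_eq_iff[OF psW t sS] by simp
qed

lemma leafW:
  assumes s: "s \<in> Uhw \<zeta> h w"
    and leafH: "is_leaf (qspace \<zeta> (dh h)) (qdist \<zeta> (dh h)) (qroot \<zeta> (dh h)) (qclass \<zeta> (dh h) s)"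
  shows "is_leaf (qspace \<zeta> (dhw h w)) (qdist \<zeta> (dhw h w)) (qroot \<zeta> (dhw h w)) (qclass \<zeta> (dhw h w) s)"
proof -
  interpret MS: Metric_space "qspace \<zeta> (dhw h w)" "qdist \<zeta> (dhw h w)" by (rule msW)
  have sS: "s \<in> S'" using s unfolding Uhw_def by auto
  have z0: "0 \<in> S'" using z by simp
  let ?M = "qspace \<zeta> (dhw h w)" and ?d = "qdist \<zeta> (dhw h w)" and ?p = "qclass \<zeta> (dhw h w)"
  define x where "x = ?p s"
  define r where "r = ?p 0"
  have xM: "x \<in> ?M" and rM: "r \<in> ?M" unfolding x_def r_def using qclass_in[OF psW] sS z0 by auto
  have xr: "x \<noteq> r" unfolding x_def r_def by (rule rootW_ne[OF s])
  have geo: "\<exists>g. geodesic ?M ?d y r g" if "y \<in> ?M" for y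
    using rtW that rM unfolding real_tree_def by blast
  define C where "C y = (SOME g. geodesic ?M ?d y r g) ` {0..?d y r}" for y
  have Cprops: "connectedin MS.mtopology (C y) \<and> C y \<subseteq> ?M - {x} \<and> y \<in> C y \<and> r \<in> C y"
    if y: "y \<in> ?M - {x}" for y
  proof -
    define g where "g = (SOME g. geodesic ?M ?d y r g)"
    have "\<exists>g. geodesic ?M ?d y r g" using geo y by simp
    then have g: "geodesic ?M ?d y r g" unfolding g_def by (rule someI_ex)
    have gM: "g ` {0..?d y r} \<subseteq> ?M" and iso: "\<And>a b. a \<in> {0..?d y r} \<Longrightarrow> b \<in> {0..?d y r} \<Longrightarrow> ?d (g a) (g b) = \<bar>a - b\<bar>"
      and g0: "g 0 = y" and gD: "g (?d y r) = r"
      using g unfolding geodesic_def by auto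
    have D0: "0 \<le> ?d y r" by simp
    have cm: "continuous_map (top_of_set {0..?d y r}) MS.mtopology g"
      by (rule isometry_cont[OF msW gM iso])
    have "connectedin (top_of_set {0..?d y r}) {0..?d y r}" by (simp add: connectedin_subtopology)
    then have conn: "connectedin MS.mtopology (C y)"
      unfolding C_def g_def[symmetric] by (rule connectedin_continuous_map_image[OF cm])
    have avoid: "g a \<noteq> x" if a: "a \<in> {0..?d y r}" for a
    proof
      assume gx: "g a = x"
      note gd = geodesic_dists[OF msW g a]
      have btw: "?d y x + ?d x r = ?d y r" using gd gx by simp
      obtain t where t: "t \<in> S'" "y = ?p t" using y by (meson DiffD1 qspaceE[OF psW])
      have ne: "?p t \<noteq> ?p s" using y t x_def by simp
      have "dhw h w t s + dhw h w s 0 = dhw h w t 0"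
        using btw unfolding t(2) x_def r_def qdist_qclass[OF psW t(1) sS] qdist_qclass[OF psW sS z0]
          qdist_qclass[OF psW t(1) z0] .
      then show False using notbetween[OF s leafH t(1) ne] by simp
    qed
    have "C y \<subseteq> ?M - {x}"
    proof
      fix v assume "v \<in> C y"
      then obtain a where a: "a \<in> {0..?d y r}" "v = g a" unfolding C_def g_def[symmetric] by blast
      then show "v \<in> ?M - {x}" using gM avoid[OF a(1)] by blast
    qed
    moreover have "y \<in> C y" unfolding C_def g_def[symmetric] using g0 D0 by force
    moreover have "r \<in> C y" unfolding C_def g_def[symmetric] using gD D0 by force
    ultimately show ?thesis using conn by blast
  qed
  have U: "?M - {x} = \<Union> (C ` (?M - {x}))" using Cprops by blast
  have "connectedin MS.mtopology (\<Union> (C ` (?M - {x})))"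
  proof (rule connectedin_Union)
    show "\<And>S. S \<in> C ` (?M - {x}) \<Longrightarrow> connectedin MS.mtopology S" using Cprops by blast
    show "\<Inter> (C ` (?M - {x})) \<noteq> {}" using Cprops by blast
  qed
  then have "connectedin MS.mtopology (?M - {x})" using U by simp
  then show ?thesis unfolding is_leaf_def qroot_def x_def r_def using xM xr x_def r_def by simp
qed


lemma AE_leafW:
  "AE x in qmeasure \<zeta> (dhw h w). is_leaf (qspace \<zeta> (dhw h w)) (qdist \<zeta> (dhw h w)) (qroot \<zeta> (dhw h w)) x"
proof -
  interpret MS: Metric_space "qspace \<zeta> (dhw h w)" "qdist \<zeta> (dhw h w)" by (rule msW)
  let ?pH = "qclass \<zeta> (dh h)" and ?pW = "qclass \<zeta> (dhw h w)"
  let ?BW = "borel_of MS.mtopology"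
  obtain N where N: "N \<in> sets (borel_of (Metric_space.mtopology (qspace \<zeta> (dh h)) (qdist \<zeta> (dh h))))"
    "emeasure (qmeasure \<zeta> (dh h)) N = 0"
    "\<And>x. x \<in> qspace \<zeta> (dh h) \<Longrightarrow> \<not> is_leaf (qspace \<zeta> (dh h)) (qdist \<zeta> (dh h)) (qroot \<zeta> (dh h)) x \<Longrightarrow> x \<in> N"
    by (rule hypH_N) blast
  define Bad2 where "Bad2 = ?pH -` N \<inter> S'"
  have B2m: "Bad2 \<in> sets lebesgue" unfolding Bad2_def by (rule preimage_lebesgue[OF measH N(1)])
  have "emeasure lebesgue Bad2 = 0" unfolding Bad2_def using q_emeasure[OF psH measH N(1)] N(2) by simp
  then have B2: "Bad2 \<in> null_sets lebesgue" using B2m by auto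
  define G where "G = S' - ((S' - Uhw \<zeta> h w) \<union> Bad2)"
  have Am: "S' - Uhw \<zeta> h w \<in> sets lebesgue" using nullU by auto
  have Sm: "S' \<in> sets lebesgue" by simp
  have Gm: "G \<in> sets lebesgue" unfolding G_def by (rule sets.Diff[OF Sm sets.Un[OF Am B2m]])
  have Gleaf: "is_leaf (qspace \<zeta> (dhw h w)) (qdist \<zeta> (dhw h w)) (qroot \<zeta> (dhw h w)) (?pW s)" if "s \<in> G" for s
  proof -
    have sU: "s \<in> Uhw \<zeta> h w" and sS: "s \<in> S'" and sN: "?pH s \<notin> N" using that unfolding G_def Bad2_def by auto
    have "?pH s \<in> qspace \<zeta> (dh h)" using qclass_in[OF psH sS] .
    then have "is_leaf (qspace \<zeta> (dh h)) (qdist \<zeta> (dh h)) (qroot \<zeta> (dh h)) (?pH s)" using N(3) sN by blast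
    then show ?thesis by (rule leafW[OF sU])
  qed
  have "\<forall>n::nat. \<exists>T. closed T \<and> T \<subseteq> G \<and> emeasure lebesgue (G - T) < ennreal (1 / Suc n)"
  proof
    fix n :: nat
    obtain T where "closed T" "T \<subseteq> G" "G - T \<in> lmeasurable" "emeasure lebesgue (G - T) < ennreal (1 / Suc n)"
      by (rule sets_lebesgue_inner_closed[OF Gm, of "1 / Suc n"]) simp
    then show "\<exists>T. closed T \<and> T \<subseteq> G \<and> emeasure lebesgue (G - T) < ennreal (1 / Suc n)" by blast
  qed
  then obtain T where T: "\<And>n. closed (T n)" "\<And>n. T n \<subseteq> G" "\<And>n. emeasure lebesgue (G - T n) < ennreal (1 / Suc n)"
    by metis
  define F where "F = (\<Union>n. T n)"
  have Tm: "T n \<in> sets lebesgue" for n using T(1)[of n] by (simp add: borel_closed sets_completionI_sets)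
  have Fm: "F \<in> sets lebesgue" unfolding F_def using Tm by auto
  have GFm: "G - F \<in> sets lebesgue" using Gm Fm by auto
  have GF0: "emeasure lebesgue (G - F) = 0"
  proof -
    have "emeasure lebesgue (G - F) \<le> 0"
    proof (rule ennreal_le_epsilon)
      fix e :: real assume e: "0 < e"
      obtain n :: nat where n: "inverse (Suc n) < e" using reals_Archimedean[OF e] by auto
      have "emeasure lebesgue (G - F) \<le> emeasure lebesgue (G - T n)"
        by (rule emeasure_mono) (use Gm Tm F_def in auto)
      also have "\<dots> \<le> ennreal (1 / Suc n)" using T(3)[of n] by simp
      also have "\<dots> \<le> ennreal e" using n by (intro ennreal_leI) (simp add: divide_inverse)
      finally show "emeasure lebesgue (G - F) \<le> 0 + ennreal e" by simp
    qed
    then show ?thesis by simp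
  qed
  define K where "K n = ?pW ` T n" for n
  have Kc: "closedin MS.mtopology (K n)" for n
  proof -
    have "compact (T n)"
    proof -
      have "T n = S' \<inter> T n" using T(2)[of n] unfolding G_def by auto
      moreover have "compact (S' \<inter> T n)" by (rule compact_Int_closed[OF compact_Icc T(1)])
      ultimately show ?thesis by simp
    qed
    moreover have "T n \<subseteq> S'" using T(2)[of n] unfolding G_def by auto
    ultimately have "compactin (top_of_set S') (T n)" by (simp add: compactin_subtopology)
    then have "compactin MS.mtopology (K n)" unfolding K_def by (rule image_compactin[OF _ cmW])
    then show ?thesis by (rule compactin_imp_closedin[OF MS.Hausdorff_space_mtopology])
  qed
  define B where "B = qspace \<zeta> (dhw h w) - (\<Union>n. K n)"
  have KB: "(\<Union>n. K n) \<in> sets ?BW" using closedin_in_borel_of[OF Kc] by auto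
  have Bs: "B \<in> sets ?BW"
  proof -
    have "space ?BW - (\<Union>n. K n) \<in> sets ?BW" by (rule sets.compl_sets[OF KB])
    moreover have "space ?BW = qspace \<zeta> (dhw h w)" by (simp add: space_borel_of)
    ultimately show ?thesis unfolding B_def by simp
  qed
  have sub: "?pW -` B \<inter> S' \<subseteq> (S' - Uhw \<zeta> h w) \<union> Bad2 \<union> (G - F)"
  proof
    fix s assume s: "s \<in> ?pW -` B \<inter> S'"
    have "s \<notin> F"
    proof
      assume "s \<in> F"
      then obtain n where "s \<in> T n" unfolding F_def by auto
      then have "?pW s \<in> K n" unfolding K_def by auto
      then show False using s unfolding B_def by auto
    qed
    then show "s \<in> (S' - Uhw \<zeta> h w) \<union> Bad2 \<union> (G - F)" using s unfolding G_def by auto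
  qed
  have "emeasure (qmeasure \<zeta> (dhw h w)) B = emeasure lebesgue (?pW -` B \<inter> S')"
    by (rule q_emeasure[OF psW measW Bs])
  also have "\<dots> \<le> emeasure lebesgue ((S' - Uhw \<zeta> h w) \<union> Bad2 \<union> (G - F))"
    by (rule emeasure_mono[OF sub]) (use nullU B2m GFm in auto)
  also have "\<dots> = 0"
  proof -
    have "G - F \<in> null_sets lebesgue" using GFm GF0 by auto
    then have "(S' - Uhw \<zeta> h w) \<union> Bad2 \<union> (G - F) \<in> null_sets lebesgue"
      using nullU B2 by (intro null_sets.Un)
    then show ?thesis by auto
  qed
  finally have B0: "emeasure (qmeasure \<zeta> (dhw h w)) B = 0" by simp
  have Bsq: "B \<in> sets (qmeasure \<zeta> (dhw h w))" using Bs unfolding qmeasure_def by simp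
  have spW: "space (qmeasure \<zeta> (dhw h w)) = qspace \<zeta> (dhw h w)"
    by (simp add: qmeasure_def space_borel_of)
  show ?thesis
  proof (rule AE_I')
    show "B \<in> null_sets (qmeasure \<zeta> (dhw h w))" using Bsq B0 by auto
    show "{x \<in> space (qmeasure \<zeta> (dhw h w)). \<not> is_leaf (qspace \<zeta> (dhw h w)) (qdist \<zeta> (dhw h w)) (qroot \<zeta> (dhw h w)) x} \<subseteq> B"
    proof
      fix x assume x: "x \<in> {x \<in> space (qmeasure \<zeta> (dhw h w)). \<not> is_leaf (qspace \<zeta> (dhw h w)) (qdist \<zeta> (dhw h w)) (qroot \<zeta> (dhw h w)) x}"
      have "x \<notin> K n" for n
      proof
        assume "x \<in> K n"
        then obtain s where "s \<in> T n" "x = ?pW s" unfolding K_def by auto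
        then show False using Gleaf[of s] T(2)[of n] x by auto
      qed
      then show "x \<in> B" using x spW unfolding B_def by auto
    qed
  qed
qed

theorem main:
  "continuum_real_tree (qspace \<zeta> (dhw h w)) (qdist \<zeta> (dhw h w)) (qroot \<zeta> (dhw h w)) (qmeasure \<zeta> (dhw h w))"
  unfolding continuum_real_tree_def
proof (intro conjI)
  interpret MS: Metric_space "qspace \<zeta> (dhw h w)" "qdist \<zeta> (dhw h w)" by (rule msW)
  have z0: "0 \<in> S'" using z by simp
  show "real_tree (qspace \<zeta> (dhw h w)) (qdist \<zeta> (dhw h w))" by (rule rtW)
  show "compact_space MS.mtopology" by (rule q_compact[OF psW cmW])
  show "qroot \<zeta> (dhw h w) \<in> qspace \<zeta> (dhw h w)" unfolding qroot_def using qclass_in[OF psW z0] .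
  show "space (qmeasure \<zeta> (dhw h w)) = qspace \<zeta> (dhw h w)" by (simp add: qmeasure_def space_borel_of)
  show "sets (qmeasure \<zeta> (dhw h w)) = sets (borel_of MS.mtopology)" by (simp add: qmeasure_def)
  show "finite_measure (qmeasure \<zeta> (dhw h w))" by (rule q_finite[OF psW measW z])
  show "\<forall>x\<in>qspace \<zeta> (dhw h w). emeasure (qmeasure \<zeta> (dhw h w)) {x} = 0" using atomsW by blast
  show "msupport (qspace \<zeta> (dhw h w)) (qdist \<zeta> (dhw h w)) (qmeasure \<zeta> (dhw h w)) = qspace \<zeta> (dhw h w)"
    by (rule q_support[OF psW cmW measW z])
  show "AE x in qmeasure \<zeta> (dhw h w). is_leaf (qspace \<zeta> (dhw h w)) (qdist \<zeta> (dhw h w)) (qroot \<zeta> (dhw h w)) x"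
    by (rule AE_leafW)
qed

end

theorem lemma4p26:
  fixes \<zeta> :: real and h :: "real \<Rightarrow> real" and w :: "real \<Rightarrow> real \<Rightarrow> real"
  assumes "\<zeta> > 0"
    and "is_snake \<zeta> h w"
    and "{0..\<zeta>} - Uhw \<zeta> h w \<in> null_sets lebesgue"
    and "continuum_real_tree (qspace \<zeta> (dh h)) (qdist \<zeta> (dh h)) (qroot \<zeta> (dh h)) (qmeasure \<zeta> (dh h))"
  shows "continuum_real_tree (qspace \<zeta> (dhw h w)) (qdist \<zeta> (dhw h w)) (qroot \<zeta> (dhw h w)) (qmeasure \<zeta> (dhw h w))"
  by (rule main[OF assms])

end
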